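(* Fix an integer $n\ge 1$. For every formula $\varphi$ in the variables $x_1,\dots,x_n$, $\chi^+([\varphi]_\equiv)$, computed in $\mathcal{NM}^-_n$, equals the number of Boolean assignments $\mu:\{x_1,\dots,x_n\}\to\{0,1\}$ such that $\varphi$ evaluates to $1$ under $\mu$ in the two-element NM chain.
   Context: An NM algebra is an algebra $\langle A,\wedge,\vee,\odot,\to,\bot,\top\rangle$ such that $(A,\wedge,\vee,\bot,\top)$ is a bounded lattice, $\langle A,\odot,\top\rangle$ is a commutative monoid, and for all $x,y,z$: $x\odot y\le z$ iff $x\le y\to z$; $(x\to y)\vee(y\to x)=\top$; $\neg(x\odot y)\vee((x\wedge y)\to(x\odot y))=\top$ where $\neg x:=x\to\bot$; and $\neg\neg x=x$. An NM$^-$ algebra is an NM algebra additionally satisfying $\neg(\neg x^2)^2\leftrightarrow(\neg(\neg x)^2)^2=\top$, where $y^2:=y\odot y$ and $u\leftrightarrow v:=(u\to v)\odot(v\to u)$. $\mathcal{NM}^-_n$ is the free NM$^-$ algebra on $n$ generators, i.e. the Lindenbaum algebra of formulas in $x_1,\dots,x_n$ modulo equivalence in the logic NM$^-$; $[\varphi]_\equiv$ is the class of $\varphi$. It is a finite distributive lattice. A valuation on a distributive lattice $L$ is a map $\nu:L\to\mathbb{R}$ with $\nu(x)+\nu(y)=\nu(x\vee y)+\nu(x\wedge y)$; on a finite distributive lattice it is uniquely determined by its values on join-irreducible elements and on $\bot$. An element is join-irreducible if it is not $\bot$ and $x=y\vee z$ implies $x=y$ or $x=z$. The idempotent Euler characteristic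 $\chi^+:\mathcal{NM}^-_n\to\mathbb{R}$ is the unique valuation with $\chi^+(\bot)=0$ and, for each join-irreducible $g$, $\chi^+(g)=1$ if $g\odot g=g$ and $\chi^+(g)=0$ otherwise. *)

theory Defs
  imports Complex_Main
begin

text \<open>Variable x_(i+1) is represented by Var i; formulas in x_1..x_n are those
  whose variables are all < n.\<close>

datatype form =
    Var nat
  | Bot
  | Top
  | And form form
  | Or form form
  | Conj form form   (* strong conjunction, odot *)
  | Imp form form

fun vars :: "form \<Rightarrow> nat set" where
  "vars (Var i) = {i}"
| "vars Bot = {}"
| "vars Top = {}"
| "vars (And a b) = vars a \<union> vars b"
| "vars (Or a b) = vars a \<union> vars b"
| "vars (Conj a b) = vars a \<union> vars b"
| "vars (Imp a b) = vars a \<union> vars b"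

definition in_vars :: "nat \<Rightarrow> form \<Rightarrow> bool" where
  "in_vars n \<phi> \<longleftrightarrow> vars \<phi> \<subseteq> {..<n}"

record 'a nm_ops =
  carrier :: "'a set"
  meet :: "'a \<Rightarrow> 'a \<Rightarrow> 'a"
  join :: "'a \<Rightarrow> 'a \<Rightarrow> 'a"
  mult :: "'a \<Rightarrow> 'a \<Rightarrow> 'a"
  imp  :: "'a \<Rightarrow> 'a \<Rightarrow> 'a"
  bot  :: "'a"
  top  :: "'a"

definition nm_le :: "('a, 'b) nm_ops_scheme \<Rightarrow> 'a \<Rightarrow> 'a \<Rightarrow> bool" where
  "nm_le A x y \<longleftrightarrow> meet A x y = x"

definition nm_neg :: "('a, 'b) nm_ops_scheme \<Rightarrow> 'a \<Rightarrow> 'a" where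
  "nm_neg A x = imp A x (bot A)"

definition nm_sq :: "('a, 'b) nm_ops_scheme \<Rightarrow> 'a \<Rightarrow> 'a" where
  "nm_sq A x = mult A x x"

definition nm_biimp :: "('a, 'b) nm_ops_scheme \<Rightarrow> 'a \<Rightarrow> 'a \<Rightarrow> 'a" where
  "nm_biimp A u v = mult A (imp A u v) (imp A v u)"

definition nm_algebra :: "('a, 'b) nm_ops_scheme \<Rightarrow> bool" where
  "nm_algebra A \<longleftrightarrow>
     bot A \<in> carrier A \<and> top A \<in> carrier A \<and>
     (\<forall>x\<in>carrier A. \<forall>y\<in>carrier A.
        meet A x y \<in> carrier A \<and> join A x y \<in> carrier A \<and>
        mult A x y \<in> carrier A \<and> imp A x y \<in> carrier A) \<and>
     \<comment> \<open>bounded lattice\<close>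
     (\<forall>x\<in>carrier A. \<forall>y\<in>carrier A.
        meet A x y = meet A y x \<and> join A x y = join A y x \<and>
        meet A x (join A x y) = x \<and> join A x (meet A x y) = x) \<and>
     (\<forall>x\<in>carrier A. \<forall>y\<in>carrier A. \<forall>z\<in>carrier A.
        meet A x (meet A y z) = meet A (meet A x y) z \<and>
        join A x (join A y z) = join A (join A x y) z) \<and>
     (\<forall>x\<in>carrier A. meet A (bot A) x = bot A \<and> join A (top A) x = top A) \<and>
     \<comment> \<open>commutative monoid\<close>
     (\<forall>x\<in>carrier A. \<forall>y\<in>carrier A. mult A x y = mult A y x) \<and>
     (\<forall>x\<in>carrier A. \<forall>y\<in>carrier A. \<forall>z\<in>carrier A.
        mult A x (mult A y z) = mult A (mult A x y) z) \<and>
     (\<forall>x\<in>carrier A. mult A (top A) x = x) \<and>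
     \<comment> \<open>residuation\<close>
     (\<forall>x\<in>carrier A. \<forall>y\<in>carrier A. \<forall>z\<in>carrier A.
        nm_le A (mult A x y) z \<longleftrightarrow> nm_le A x (imp A y z)) \<and>
     \<comment> \<open>prelinearity\<close>
     (\<forall>x\<in>carrier A. \<forall>y\<in>carrier A. join A (imp A x y) (imp A y x) = top A) \<and>
     \<comment> \<open>NM axiom\<close>
     (\<forall>x\<in>carrier A. \<forall>y\<in>carrier A.
        join A (nm_neg A (mult A x y)) (imp A (meet A x y) (mult A x y)) = top A) \<and>
     \<comment> \<open>involution\<close>
     (\<forall>x\<in>carrier A. nm_neg A (nm_neg A x) = x)"

definition nm_minus_algebra :: "('a, 'b) nm_ops_scheme \<Rightarrow> bool" where
  "nm_minus_algebra A \<longleftrightarrow> nm_algebra A \<and>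
     (\<forall>x\<in>carrier A.
        nm_biimp A (nm_neg A (nm_sq A (nm_neg A (nm_sq A x))))
                   (nm_sq A (nm_neg A (nm_sq A (nm_neg A x)))) = top A)"

fun eval :: "('a, 'b) nm_ops_scheme \<Rightarrow> (nat \<Rightarrow> 'a) \<Rightarrow> form \<Rightarrow> 'a" where
  "eval A v (Var i) = v i"
| "eval A v Bot = bot A"
| "eval A v Top = top A"
| "eval A v (And a b) = meet A (eval A v a) (eval A v b)"
| "eval A v (Or a b) = join A (eval A v a) (eval A v b)"
| "eval A v (Conj a b) = mult A (eval A v a) (eval A v b)"
| "eval A v (Imp a b) = imp A (eval A v a) (eval A v b)"

text \<open>By algebraizability, two formulas are equivalent in NM^- iff they evaluate equally
  in every NM^- algebra under every assignment.  Since any counterexample lives in a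
  finitely generated (hence countable) subalgebra, it suffices to range over NM^- algebras
  whose carrier is a subset of nat.\<close>

definition nm_equiv :: "form \<Rightarrow> form \<Rightarrow> bool" where
  "nm_equiv \<phi> \<psi> \<longleftrightarrow>
     (\<forall>(A :: nat nm_ops) v. nm_minus_algebra A \<longrightarrow> (\<forall>i. v i \<in> carrier A) \<longrightarrow>
        eval A v \<phi> = eval A v \<psi>)"

definition join_irreducible :: "nat \<Rightarrow> form \<Rightarrow> bool" where
  "join_irreducible n g \<longleftrightarrow> in_vars n g \<and> \<not> nm_equiv g Bot \<and>
     (\<forall>a b. in_vars n a \<longrightarrow> in_vars n b \<longrightarrow> nm_equiv g (Or a b) \<longrightarrow>
        nm_equiv g a \<or> nm_equiv g b)"

definition idempotent_class :: "form \<Rightarrow> bool" where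
  "idempotent_class g \<longleftrightarrow> nm_equiv (Conj g g) g"

text \<open>A real-valued function on the Lindenbaum algebra NM^-_n, represented as a function on
  formulas in the first n variables that respects equivalence.\<close>

definition is_lattice_valuation :: "nat \<Rightarrow> (form \<Rightarrow> real) \<Rightarrow> bool" where
  "is_lattice_valuation n \<nu> \<longleftrightarrow>
     (\<forall>a b. in_vars n a \<longrightarrow> in_vars n b \<longrightarrow> nm_equiv a b \<longrightarrow> \<nu> a = \<nu> b) \<and>
     (\<forall>a b. in_vars n a \<longrightarrow> in_vars n b \<longrightarrow> \<nu> a + \<nu> b = \<nu> (Or a b) + \<nu> (And a b))"

definition is_chi_plus :: "nat \<Rightarrow> (form \<Rightarrow> real) \<Rightarrow> bool" where
  "is_chi_plus n \<nu> \<longleftrightarrow> is_lattice_valuation n \<nu> \<and> \<nu> Bot = 0 \<and>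
     (\<forall>g. join_irreducible n g \<longrightarrow> \<nu> g = (if idempotent_class g then 1 else 0))"

fun bool_eval :: "(nat \<Rightarrow> bool) \<Rightarrow> form \<Rightarrow> bool" where
  "bool_eval \<mu> (Var i) = \<mu> i"
| "bool_eval \<mu> Bot = False"
| "bool_eval \<mu> Top = True"
| "bool_eval \<mu> (And a b) = (bool_eval \<mu> a \<and> bool_eval \<mu> b)"
| "bool_eval \<mu> (Or a b) = (bool_eval \<mu> a \<or> bool_eval \<mu> b)"
| "bool_eval \<mu> (Conj a b) = (bool_eval \<mu> a \<and> bool_eval \<mu> b)"
| "bool_eval \<mu> (Imp a b) = (bool_eval \<mu> a \<longrightarrow> bool_eval \<mu> b)"

text \<open>Boolean assignments on x_1..x_n, represented as functions nat => bool that are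
  False outside {..<n} (a bijective encoding).\<close>

definition bool_assignments :: "nat \<Rightarrow> (nat \<Rightarrow> bool) set" where
  "bool_assignments n = {\<mu>. \<forall>i. n \<le> i \<longrightarrow> \<not> \<mu> i}"

end

theory Submission
  imports Defs "HOL-Library.FuncSet"
begin


definition Qmult :: "nat \<Rightarrow> nat \<Rightarrow> nat \<Rightarrow> nat" where
  "Qmult N k l = (if k + l \<le> 2*N then 0 else min k l)"

definition Q :: "nat \<Rightarrow> nat nm_ops" where
  "Q N = \<lparr>carrier = {k. k \<le> 2*N \<and> k \<noteq> N}, meet = min, join = max,
     mult = Qmult N, imp = (\<lambda>k l. 2*N - Qmult N k (2*N - l)), bot = 0, top = 2*N\<rparr>"

lemma Q_simps[simp]: "carrier (Q N) = {k. k \<le> 2*N \<and> k \<noteq> N}" "meet (Q N) = min" "join (Q N) = max"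
  "mult (Q N) = Qmult N" "imp (Q N) = (\<lambda>k l. 2*N - Qmult N k (2*N - l))" "bot (Q N) = 0" "top (Q N) = 2*N"
  by (simp_all add: Q_def)

lemma Qimp_eq: "x \<le> 2*N \<Longrightarrow> y \<le> 2*N \<Longrightarrow> 2*N - Qmult N x (2*N - y) = (if x \<le> y then 2*N else max (2*N - x) y)"
  by (auto simp: Qmult_def)

lemma Qneg: "x \<le> 2*N \<Longrightarrow> 2*N - Qmult N x (2*N - 0) = 2*N - x"
  by (auto simp: Qmult_def)

lemma Q_assoc: "Qmult N x (Qmult N y z) = Qmult N (Qmult N x y) z"
  by (auto simp: Qmult_def)




lemma Qmult_in: "x \<le> 2*N \<Longrightarrow> y \<le> 2*N \<Longrightarrow> x \<noteq> N \<Longrightarrow> y \<noteq> N \<Longrightarrow> Qmult N x y \<le> 2*N \<and> Qmult N x y \<noteq> N"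
  by (auto simp: Qmult_def min_def)

lemma Qsq: "Qmult N x x = (if x \<le> N then 0 else x)"
  by (auto simp: Qmult_def)

lemma Qneg2: "x \<le> 2*N \<Longrightarrow> 2*N - Qmult N x (2*N) = 2*N - x"
  using Qneg by simp

lemma Q_resid: "x \<le> 2*N \<Longrightarrow> y \<le> 2*N \<Longrightarrow> z \<le> 2*N \<Longrightarrow>
   (min (Qmult N x y) z = Qmult N x y) = (min x (2*N - Qmult N y (2*N - z)) = x)"
  by (simp add: Qimp_eq) (auto simp: Qmult_def min_def max_def)

lemma Q_prelin: "x \<le> 2*N \<Longrightarrow> y \<le> 2*N \<Longrightarrow>
   max (2*N - Qmult N x (2*N - y)) (2*N - Qmult N y (2*N - x)) = 2*N"
  by (simp add: Qimp_eq)

lemma Q_NM: "x \<le> 2*N \<Longrightarrow> y \<le> 2*N \<Longrightarrow>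
  max (2*N - Qmult N (Qmult N x y) (2*N - 0)) (2*N - Qmult N (min x y) (2*N - Qmult N x y)) = 2*N"
proof -
  assume a: "x \<le> 2*N" "y \<le> 2*N"
  have m: "Qmult N x y \<le> 2*N" using a by (auto simp: Qmult_def)
  show ?thesis using a m by (simp add: Qimp_eq Qmult_def)
qed

lemma Q_inv: "x \<le> 2*N \<Longrightarrow> 2*N - Qmult N (2*N - Qmult N x (2*N - 0)) (2*N - 0) = x"
  by (simp add: Qneg2)

lemma Q_minus: "x \<le> 2*N \<Longrightarrow> x \<noteq> N \<Longrightarrow> N \<ge> 1 \<Longrightarrow>
  (let ng = (\<lambda>k. 2*N - Qmult N k (2*N - 0)); sq = (\<lambda>k. Qmult N k k); im = (\<lambda>k l. 2*N - Qmult N k (2*N - l));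
       L = ng (sq (ng (sq x))); R = sq (ng (sq (ng x))) in Qmult N (im L R) (im R L)) = 2*N"
  by (cases "x < N") (simp_all add: Let_def Qsq Qneg2 Qimp_eq, simp_all add: Qmult_def)

lemma Q_nm: assumes N: "N \<ge> 1" shows "nm_minus_algebra (Q N)"
proof -
  let ?C = "{k. k \<le> 2*N \<and> k \<noteq> N}"
  have imp_in: "2*N - Qmult N x (2*N - y) \<in> ?C" if "x \<in> ?C" "y \<in> ?C" for x y
    using that by (simp add: Qimp_eq) (auto simp: max_def)
  have A: "nm_algebra (Q N)"
    unfolding nm_algebra_def nm_le_def nm_neg_def
    apply (simp only: Q_simps)
    apply (intro conjI ballI)
    using N apply simp
    apply (simp_all add: Qmult_in imp_in Q_assoc Q_resid Q_prelin Q_NM Q_inv)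
    using N apply (auto simp: min_def max_def Qmult_def)
    done
  show ?thesis unfolding nm_minus_algebra_def
    apply (rule conjI[OF A])
    unfolding nm_biimp_def nm_neg_def nm_sq_def
    apply (simp only: Q_simps)
    using Q_minus[OF _ _ N] by (simp add: Let_def)
qed




definition nmf :: form where
  "nmf = (let ngF = (\<lambda>t. Imp t Bot); sqF = (\<lambda>t. Conj t t);
     L = ngF (sqF (ngF (sqF (Var 0)))); R = sqF (ngF (sqF (ngF (Var 0)))) in Conj (Imp L R) (Imp R L))"

lemma vars_nmf[simp]: "vars nmf = {0}" by (simp add: nmf_def Let_def)

locale nma = fixes A :: "('a,'b) nm_ops_scheme" assumes nm: "nm_algebra A"
begin
lemmas AX = nm[unfolded nm_algebra_def]
lemmas c_bot = AX[THEN conjunct1]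
lemmas c_top = AX[THEN conjunct2, THEN conjunct1]
lemmas c_clos = AX[THEN conjunct2, THEN conjunct2, THEN conjunct1]
lemmas c_lat = AX[THEN conjunct2, THEN conjunct2, THEN conjunct2, THEN conjunct1]
lemmas c_lassoc = AX[THEN conjunct2, THEN conjunct2, THEN conjunct2, THEN conjunct2, THEN conjunct1]
lemmas c_bt = AX[THEN conjunct2, THEN conjunct2, THEN conjunct2, THEN conjunct2, THEN conjunct2, THEN conjunct1]
lemmas c_comm = AX[THEN conjunct2, THEN conjunct2, THEN conjunct2, THEN conjunct2, THEN conjunct2, THEN conjunct2, THEN conjunct1]
lemmas c_massoc = AX[THEN conjunct2, THEN conjunct2, THEN conjunct2, THEN conjunct2, THEN conjunct2, THEN conjunct2, THEN conjunct2, THEN conjunct1]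
lemmas c_unit = AX[THEN conjunct2, THEN conjunct2, THEN conjunct2, THEN conjunct2, THEN conjunct2, THEN conjunct2, THEN conjunct2, THEN conjunct2, THEN conjunct1]
lemmas c_resid = AX[THEN conjunct2, THEN conjunct2, THEN conjunct2, THEN conjunct2, THEN conjunct2, THEN conjunct2, THEN conjunct2, THEN conjunct2, THEN conjunct2, THEN conjunct1]
lemmas c_prelin = AX[THEN conjunct2, THEN conjunct2, THEN conjunct2, THEN conjunct2, THEN conjunct2, THEN conjunct2, THEN conjunct2, THEN conjunct2, THEN conjunct2, THEN conjunct2, THEN conjunct1]
lemmas c_nm = AX[THEN conjunct2, THEN conjunct2, THEN conjunct2, THEN conjunct2, THEN conjunct2, THEN conjunct2, THEN conjunct2, THEN conjunct2, THEN conjunct2, THEN conjunct2, THEN conjunct2, THEN conjunct1]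
lemmas c_inv = AX[THEN conjunct2, THEN conjunct2, THEN conjunct2, THEN conjunct2, THEN conjunct2, THEN conjunct2, THEN conjunct2, THEN conjunct2, THEN conjunct2, THEN conjunct2, THEN conjunct2, THEN conjunct2]

abbreviation "C \<equiv> carrier A"
abbreviation le (infix "\<sqsubseteq>" 50) where "x \<sqsubseteq> y \<equiv> nm_le A x y"
abbreviation mt (infixl "\<sqinter>" 70) where "x \<sqinter> y \<equiv> meet A x y"
abbreviation jn (infixl "\<squnion>" 65) where "x \<squnion> y \<equiv> join A x y"
abbreviation ml (infixl "\<otimes>" 70) where "x \<otimes> y \<equiv> mult A x y"
abbreviation im (infixr "\<leadsto>" 25) where "x \<leadsto> y \<equiv> imp A x y"
abbreviation "B0 \<equiv> bot A"
abbreviation "T1 \<equiv> top A"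
abbreviation ng where "ng x \<equiv> imp A x (bot A)"

lemma bot_in[simp]: "B0 \<in> C" by (rule c_bot)
lemma top_in[simp]: "T1 \<in> C" by (rule c_top)
lemma meet_in[simp]: "x \<in> C \<Longrightarrow> y \<in> C \<Longrightarrow> x \<sqinter> y \<in> C" using c_clos by blast
lemma join_in[simp]: "x \<in> C \<Longrightarrow> y \<in> C \<Longrightarrow> x \<squnion> y \<in> C" using c_clos by blast
lemma mult_in[simp]: "x \<in> C \<Longrightarrow> y \<in> C \<Longrightarrow> x \<otimes> y \<in> C" using c_clos by blast
lemma imp_in[simp]: "x \<in> C \<Longrightarrow> y \<in> C \<Longrightarrow> (x \<leadsto> y) \<in> C" using c_clos by blast
lemma meet_comm: "x \<in> C \<Longrightarrow> y \<in> C \<Longrightarrow> x \<sqinter> y = y \<sqinter> x" using c_lat by blast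
lemma join_comm: "x \<in> C \<Longrightarrow> y \<in> C \<Longrightarrow> x \<squnion> y = y \<squnion> x" using c_lat by blast
lemma absorb1: "x \<in> C \<Longrightarrow> y \<in> C \<Longrightarrow> x \<sqinter> (x \<squnion> y) = x" using c_lat by blast
lemma absorb2: "x \<in> C \<Longrightarrow> y \<in> C \<Longrightarrow> x \<squnion> (x \<sqinter> y) = x" using c_lat by blast
lemma meet_assoc: "x \<in> C \<Longrightarrow> y \<in> C \<Longrightarrow> z \<in> C \<Longrightarrow> x \<sqinter> (y \<sqinter> z) = (x \<sqinter> y) \<sqinter> z" using c_lassoc by blast
lemma join_assoc: "x \<in> C \<Longrightarrow> y \<in> C \<Longrightarrow> z \<in> C \<Longrightarrow> x \<squnion> (y \<squnion> z) = (x \<squnion> y) \<squnion> z" using c_lassoc by blast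
lemma bot_meet: "x \<in> C \<Longrightarrow> B0 \<sqinter> x = B0" using c_bt by blast
lemma top_join: "x \<in> C \<Longrightarrow> T1 \<squnion> x = T1" using c_bt by blast
lemma mult_comm: "x \<in> C \<Longrightarrow> y \<in> C \<Longrightarrow> x \<otimes> y = y \<otimes> x" using c_comm by blast
lemma mult_assoc: "x \<in> C \<Longrightarrow> y \<in> C \<Longrightarrow> z \<in> C \<Longrightarrow> x \<otimes> (y \<otimes> z) = (x \<otimes> y) \<otimes> z" using c_massoc by blast
lemma top_mult[simp]: "x \<in> C \<Longrightarrow> T1 \<otimes> x = x" using c_unit by blast
lemma resid: "x \<in> C \<Longrightarrow> y \<in> C \<Longrightarrow> z \<in> C \<Longrightarrow> (x \<otimes> y \<sqsubseteq> z) = (x \<sqsubseteq> (y \<leadsto> z))" using c_resid by blast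
lemma prelin: "x \<in> C \<Longrightarrow> y \<in> C \<Longrightarrow> (x \<leadsto> y) \<squnion> (y \<leadsto> x) = T1" using c_prelin by blast
lemma nmax: "x \<in> C \<Longrightarrow> y \<in> C \<Longrightarrow> ng (x \<otimes> y) \<squnion> (x \<sqinter> y \<leadsto> x \<otimes> y) = T1" using c_nm unfolding nm_neg_def by blast
lemma invol[simp]: "x \<in> C \<Longrightarrow> ng (ng x) = x" using c_inv unfolding nm_neg_def by blast

lemma le_def': "x \<sqsubseteq> y \<longleftrightarrow> x \<sqinter> y = x" by (simp add: nm_le_def)
lemma meet_idem: "x \<in> C \<Longrightarrow> x \<sqinter> x = x"
  by (metis absorb1 absorb2 meet_in)
lemma le_refl[simp]: "x \<in> C \<Longrightarrow> x \<sqsubseteq> x" by (simp add: le_def' meet_idem)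
lemma le_antisym: "x \<in> C \<Longrightarrow> y \<in> C \<Longrightarrow> x \<sqsubseteq> y \<Longrightarrow> y \<sqsubseteq> x \<Longrightarrow> x = y"
  by (metis le_def' meet_comm)
lemma le_trans: "x \<in> C \<Longrightarrow> y \<in> C \<Longrightarrow> z \<in> C \<Longrightarrow> x \<sqsubseteq> y \<Longrightarrow> y \<sqsubseteq> z \<Longrightarrow> x \<sqsubseteq> z"
  by (metis le_def' meet_assoc)
lemma meet_le1: "x \<in> C \<Longrightarrow> y \<in> C \<Longrightarrow> x \<sqinter> y \<sqsubseteq> x"
  by (metis le_def' meet_assoc meet_comm meet_idem)
lemma meet_le2: "x \<in> C \<Longrightarrow> y \<in> C \<Longrightarrow> x \<sqinter> y \<sqsubseteq> y"
  by (metis meet_le1 meet_comm)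
lemma meet_glb: "x \<in> C \<Longrightarrow> y \<in> C \<Longrightarrow> z \<in> C \<Longrightarrow> z \<sqsubseteq> x \<Longrightarrow> z \<sqsubseteq> y \<Longrightarrow> z \<sqsubseteq> x \<sqinter> y"
  by (metis le_def' meet_assoc)
lemma le_join: "x \<in> C \<Longrightarrow> y \<in> C \<Longrightarrow> x \<sqsubseteq> y \<longleftrightarrow> x \<squnion> y = y"
  by (metis le_def' absorb1 absorb2 join_comm meet_comm)
lemma join_ub1: "x \<in> C \<Longrightarrow> y \<in> C \<Longrightarrow> x \<sqsubseteq> x \<squnion> y"
  by (metis absorb1 le_def')
lemma join_ub2: "x \<in> C \<Longrightarrow> y \<in> C \<Longrightarrow> y \<sqsubseteq> x \<squnion> y"
  by (metis join_ub1 join_comm)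
lemma join_lub: "x \<in> C \<Longrightarrow> y \<in> C \<Longrightarrow> z \<in> C \<Longrightarrow> x \<sqsubseteq> z \<Longrightarrow> y \<sqsubseteq> z \<Longrightarrow> x \<squnion> y \<sqsubseteq> z"
  by (metis le_join join_assoc join_in)
lemma bot_le[simp]: "x \<in> C \<Longrightarrow> B0 \<sqsubseteq> x" by (simp add: le_def' bot_meet)
lemma le_top[simp]: "x \<in> C \<Longrightarrow> x \<sqsubseteq> T1" by (metis le_join join_comm top_join top_in)
lemma top_le: "x \<in> C \<Longrightarrow> T1 \<sqsubseteq> x \<Longrightarrow> x = T1" by (simp add: le_antisym)
lemma mult_top[simp]: "x \<in> C \<Longrightarrow> x \<otimes> T1 = x" by (metis mult_comm top_in top_mult)


lemma mp: "x \<in> C \<Longrightarrow> y \<in> C \<Longrightarrow> x \<otimes> (x \<leadsto> y) \<sqsubseteq> y"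
  using resid[of "x \<leadsto> y" x y] by (simp add: mult_comm)
lemma mult_mono: "x \<in> C \<Longrightarrow> y \<in> C \<Longrightarrow> z \<in> C \<Longrightarrow> y \<sqsubseteq> z \<Longrightarrow> x \<otimes> y \<sqsubseteq> x \<otimes> z"
proof -
  assume a: "x \<in> C" "y \<in> C" "z \<in> C" "y \<sqsubseteq> z"
  have "z \<sqsubseteq> (x \<leadsto> x \<otimes> z)" using a resid[of z x "x \<otimes> z"] by (simp add: mult_comm)
  then have "y \<sqsubseteq> (x \<leadsto> x \<otimes> z)" using a le_trans[of y z "x \<leadsto> x \<otimes> z"] by simp
  then show ?thesis using a resid[of y x "x \<otimes> z"] by (simp add: mult_comm)
qed
lemma mult_le: "x \<in> C \<Longrightarrow> y \<in> C \<Longrightarrow> x \<otimes> y \<sqsubseteq> y"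
  using mult_mono[of y x T1] by (simp add: mult_comm)
lemma mult_le1: "x \<in> C \<Longrightarrow> y \<in> C \<Longrightarrow> x \<otimes> y \<sqsubseteq> x"
  using mult_le[of y x] by (simp add: mult_comm)
lemma imp_top_iff: "x \<in> C \<Longrightarrow> y \<in> C \<Longrightarrow> (x \<leadsto> y) = T1 \<longleftrightarrow> x \<sqsubseteq> y"
proof -
  assume a: "x \<in> C" "y \<in> C"
  have "T1 \<sqsubseteq> (x \<leadsto> y) \<longleftrightarrow> x \<sqsubseteq> y" using a resid[of T1 x y] by simp
  then show ?thesis using a top_le[of "x \<leadsto> y"] by auto
qed
lemma imp_self[simp]: "x \<in> C \<Longrightarrow> (x \<leadsto> x) = T1" by (simp add: imp_top_iff)
lemma yoneda: "a \<in> C \<Longrightarrow> b \<in> C \<Longrightarrow> (\<And>z. z \<in> C \<Longrightarrow> z \<sqsubseteq> a \<longleftrightarrow> z \<sqsubseteq> b) \<Longrightarrow> a = b"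
proof -
  assume a: "a \<in> C" "b \<in> C" and h: "\<And>z. z \<in> C \<Longrightarrow> z \<sqsubseteq> a \<longleftrightarrow> z \<sqsubseteq> b"
  have "a \<sqsubseteq> b" using h[of a] a by simp
  moreover have "b \<sqsubseteq> a" using h[of b] a by simp
  ultimately show ?thesis using a le_antisym by blast
qed
lemma top_imp[simp]: "x \<in> C \<Longrightarrow> (T1 \<leadsto> x) = x"
proof (rule yoneda)
  fix z assume "x \<in> C" "z \<in> C"
  then show "z \<sqsubseteq> (T1 \<leadsto> x) \<longleftrightarrow> z \<sqsubseteq> x" using resid[of z T1 x] by simp
qed simp_all
lemma curry: "x \<in> C \<Longrightarrow> y \<in> C \<Longrightarrow> z \<in> C \<Longrightarrow> (x \<leadsto> (y \<leadsto> z)) = (x \<otimes> y \<leadsto> z)"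
proof (rule yoneda)
  fix w assume a: "x \<in> C" "y \<in> C" "z \<in> C" "w \<in> C"
  have "w \<sqsubseteq> (x \<leadsto> (y \<leadsto> z)) \<longleftrightarrow> w \<otimes> x \<sqsubseteq> (y \<leadsto> z)" using a resid[of w x "y \<leadsto> z"] by simp
  also have "\<dots> \<longleftrightarrow> w \<otimes> x \<otimes> y \<sqsubseteq> z" using a resid[of "w \<otimes> x" y z] by simp
  also have "\<dots> \<longleftrightarrow> w \<otimes> (x \<otimes> y) \<sqsubseteq> z" using a by (simp add: mult_assoc)
  also have "\<dots> \<longleftrightarrow> w \<sqsubseteq> (x \<otimes> y \<leadsto> z)" using a resid[of w "x \<otimes> y" z] by simp
  finally show "w \<sqsubseteq> (x \<leadsto> (y \<leadsto> z)) \<longleftrightarrow> w \<sqsubseteq> (x \<otimes> y \<leadsto> z)" .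
qed simp_all
lemma imp_neg: "x \<in> C \<Longrightarrow> y \<in> C \<Longrightarrow> (x \<leadsto> y) = ng (x \<otimes> ng y)"
proof -
  assume a: "x \<in> C" "y \<in> C"
  have "(x \<leadsto> y) = (x \<leadsto> ng (ng y))" using a by simp
  also have "\<dots> = (x \<otimes> ng y \<leadsto> B0)" using a curry[of x "ng y" B0] by simp
  finally show ?thesis .
qed
lemma contra: "x \<in> C \<Longrightarrow> y \<in> C \<Longrightarrow> (ng y \<leadsto> ng x) = (x \<leadsto> y)"
proof -
  assume a: "x \<in> C" "y \<in> C"
  have "(ng y \<leadsto> ng x) = ng (ng y \<otimes> ng (ng x))" using a imp_neg[of "ng y" "ng x"] by simp
  also have "\<dots> = ng (x \<otimes> ng y)" using a by (simp add: mult_comm)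
  also have "\<dots> = (x \<leadsto> y)" using a imp_neg[of x y] by simp
  finally show ?thesis .
qed
lemma neg_top[simp]: "ng T1 = B0" by simp
lemma neg_bot[simp]: "ng B0 = T1" by simp

lemma distrib: "x \<in> C \<Longrightarrow> y \<in> C \<Longrightarrow> z \<in> C \<Longrightarrow> x \<otimes> (y \<squnion> z) = (x \<otimes> y) \<squnion> (x \<otimes> z)"
proof -
  assume a: "x \<in> C" "y \<in> C" "z \<in> C"
  let ?r = "(x \<otimes> y) \<squnion> (x \<otimes> z)"
  have r: "?r \<in> C" using a by simp
  have "x \<otimes> y \<sqsubseteq> ?r" using a join_ub1[of "x \<otimes> y" "x \<otimes> z"] by simp
  then have "y \<sqsubseteq> (x \<leadsto> ?r)" using a r resid[of y x ?r] by (simp add: mult_comm)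
  moreover have "x \<otimes> z \<sqsubseteq> ?r" using a join_ub2[of "x \<otimes> y" "x \<otimes> z"] by simp
  then have "z \<sqsubseteq> (x \<leadsto> ?r)" using a r resid[of z x ?r] by (simp add: mult_comm)
  ultimately have "y \<squnion> z \<sqsubseteq> (x \<leadsto> ?r)" using a r join_lub[of y z "x \<leadsto> ?r"] by simp
  then have 1: "x \<otimes> (y \<squnion> z) \<sqsubseteq> ?r" using a r resid[of "y \<squnion> z" x ?r] by (simp add: mult_comm)
  have "x \<otimes> y \<sqsubseteq> x \<otimes> (y \<squnion> z)" using a mult_mono[of x y "y \<squnion> z"] join_ub1[of y z] by simp
  moreover have "x \<otimes> z \<sqsubseteq> x \<otimes> (y \<squnion> z)" using a mult_mono[of x z "y \<squnion> z"] join_ub2[of y z] by simp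
  ultimately have 2: "?r \<sqsubseteq> x \<otimes> (y \<squnion> z)" using a join_lub[of "x \<otimes> y" "x \<otimes> z"] by simp
  show ?thesis using 1 2 a r le_antisym[of "x \<otimes> (y \<squnion> z)" ?r] by simp
qed
lemma imp_trans: "x \<in> C \<Longrightarrow> y \<in> C \<Longrightarrow> z \<in> C \<Longrightarrow> (x \<leadsto> y) \<otimes> (y \<leadsto> z) \<sqsubseteq> (x \<leadsto> z)"
proof -
  assume a: "x \<in> C" "y \<in> C" "z \<in> C"
  have e: "(x \<leadsto> y) \<otimes> (y \<leadsto> z) \<otimes> x = (y \<leadsto> z) \<otimes> (x \<otimes> (x \<leadsto> y))" using a
    by (metis imp_in mult_assoc mult_comm)
  have 1: "(y \<leadsto> z) \<otimes> (x \<otimes> (x \<leadsto> y)) \<sqsubseteq> (y \<leadsto> z) \<otimes> y" using a by (simp add: mp mult_mono)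
  have 2: "(y \<leadsto> z) \<otimes> y \<sqsubseteq> z" using a mp[of y z] by (simp add: mult_comm)
  have "(x \<leadsto> y) \<otimes> (y \<leadsto> z) \<otimes> x \<sqsubseteq> z" unfolding e using 1 2 a le_trans by (meson imp_in mult_in)
  then show ?thesis using a resid by simp
qed
lemma imp_antitone: "x \<in> C \<Longrightarrow> y \<in> C \<Longrightarrow> z \<in> C \<Longrightarrow> x \<sqsubseteq> y \<Longrightarrow> (y \<leadsto> z) \<sqsubseteq> (x \<leadsto> z)"
proof -
  assume a: "x \<in> C" "y \<in> C" "z \<in> C" "x \<sqsubseteq> y"
  have "(y \<leadsto> z) \<otimes> x \<sqsubseteq> (y \<leadsto> z) \<otimes> y" using a by (simp add: mult_mono)
  moreover have "(y \<leadsto> z) \<otimes> y \<sqsubseteq> z" using a mp[of y z] by (simp add: mult_comm)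
  ultimately have "(y \<leadsto> z) \<otimes> x \<sqsubseteq> z" using a le_trans by (meson imp_in mult_in)
  then show ?thesis using a resid by simp
qed
lemma imp_mono: "x \<in> C \<Longrightarrow> y \<in> C \<Longrightarrow> z \<in> C \<Longrightarrow> y \<sqsubseteq> z \<Longrightarrow> (x \<leadsto> y) \<sqsubseteq> (x \<leadsto> z)"
proof -
  assume a: "x \<in> C" "y \<in> C" "z \<in> C" "y \<sqsubseteq> z"
  have "(x \<leadsto> y) \<otimes> x \<sqsubseteq> y" using a mp[of x y] by (simp add: mult_comm)
  then have "(x \<leadsto> y) \<otimes> x \<sqsubseteq> z" using a le_trans by (meson imp_in mult_in)
  then show ?thesis using a resid by simp
qed
lemma mult_mono2: "x \<in> C \<Longrightarrow> y \<in> C \<Longrightarrow> x' \<in> C \<Longrightarrow> y' \<in> C \<Longrightarrow> x \<sqsubseteq> x' \<Longrightarrow> y \<sqsubseteq> y' \<Longrightarrow> x \<otimes> y \<sqsubseteq> x' \<otimes> y'"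
proof -
  assume a: "x \<in> C" "y \<in> C" "x' \<in> C" "y' \<in> C" "x \<sqsubseteq> x'" "y \<sqsubseteq> y'"
  have "x \<otimes> y \<sqsubseteq> x \<otimes> y'" using a by (simp add: mult_mono)
  moreover have "x \<otimes> y' \<sqsubseteq> x' \<otimes> y'" using a mult_mono[of y' x x'] by (simp add: mult_comm)
  ultimately show ?thesis using a le_trans by (meson mult_in)
qed

definition filt :: "'a set \<Rightarrow> bool" where
  "filt F \<longleftrightarrow> F \<subseteq> C \<and> T1 \<in> F \<and> (\<forall>x\<in>F. \<forall>y\<in>F. x \<otimes> y \<in> F) \<and> (\<forall>x\<in>F. \<forall>y\<in>C. x \<sqsubseteq> y \<longrightarrow> y \<in> F)"

lemma filt_sub: "filt F \<Longrightarrow> x \<in> F \<Longrightarrow> x \<in> C" by (auto simp: filt_def)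
lemma filt_top: "filt F \<Longrightarrow> T1 \<in> F" by (auto simp: filt_def)
lemma filt_mult: "filt F \<Longrightarrow> x \<in> F \<Longrightarrow> y \<in> F \<Longrightarrow> x \<otimes> y \<in> F" by (auto simp: filt_def)
lemma filt_up: "filt F \<Longrightarrow> x \<in> F \<Longrightarrow> y \<in> C \<Longrightarrow> x \<sqsubseteq> y \<Longrightarrow> y \<in> F" by (auto simp: filt_def)
lemma filt_mp: "filt F \<Longrightarrow> x \<in> F \<Longrightarrow> (x \<leadsto> y) \<in> F \<Longrightarrow> y \<in> C \<Longrightarrow> y \<in> F"
  by (meson filt_mult filt_sub filt_up mp mult_in)

fun pw :: "'a \<Rightarrow> nat \<Rightarrow> 'a" where
  "pw a 0 = T1" | "pw a (Suc k) = a \<otimes> pw a k"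

lemma pw_in[simp]: "a \<in> C \<Longrightarrow> pw a k \<in> C" by (induction k) auto
lemma pw_add: "a \<in> C \<Longrightarrow> pw a (k + m) = pw a k \<otimes> pw a m"
  by (induction k) (auto simp: mult_assoc)

lemma join_pow_top: assumes "a \<in> C" "b \<in> C" "a \<squnion> b = T1" shows "pw a k \<squnion> b = T1"
proof (induction k)
  case 0 then show ?case using assms by (simp add: top_join)
next
  case (Suc k)
  let ?p = "pw a k" and ?R = "a \<otimes> pw a k \<squnion> b"
  have p: "?p \<in> C" using assms by simp
  have R: "?R \<in> C" using assms by simp
  have e: "T1 = (?p \<otimes> a \<squnion> ?p \<otimes> b) \<squnion> ((a \<squnion> b) \<otimes> b)"
  proof -
    have "T1 = (a \<squnion> b) \<otimes> (?p \<squnion> b)" using Suc assms by simp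
    also have "\<dots> = (a \<squnion> b) \<otimes> ?p \<squnion> (a \<squnion> b) \<otimes> b" using assms p by (simp add: distrib)
    also have "(a \<squnion> b) \<otimes> ?p = ?p \<otimes> (a \<squnion> b)" using assms p by (simp add: mult_comm)
    also have "\<dots> = ?p \<otimes> a \<squnion> ?p \<otimes> b" using distrib[OF p assms(1) assms(2)] .
    finally show ?thesis .
  qed
  have bR: "b \<sqsubseteq> ?R" using assms join_ub2[of "a \<otimes> pw a k" b] by simp
  have 1: "?p \<otimes> a \<sqsubseteq> ?R" using assms p join_ub1[of "a \<otimes> pw a k" b] by (simp add: mult_comm)
  have 2: "?p \<otimes> b \<sqsubseteq> ?R" using assms p mult_le[of ?p b] bR le_trans by (meson mult_in R)
  have 3: "(a \<squnion> b) \<otimes> b \<sqsubseteq> ?R" using assms mult_le[of "a \<squnion> b" b] bR le_trans by (meson mult_in join_in R)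
  have "T1 \<sqsubseteq> ?R" using 1 2 3 e assms p R by (metis join_lub join_in mult_in)
  then show ?case using R top_le by simp
qed

lemma join_pows_top: "a \<in> C \<Longrightarrow> b \<in> C \<Longrightarrow> a \<squnion> b = T1 \<Longrightarrow> pw a k \<squnion> pw b m = T1"
proof -
  assume a: "a \<in> C" "b \<in> C" "a \<squnion> b = T1"
  have "pw a k \<squnion> b = T1" using a join_pow_top by blast
  then have "b \<squnion> pw a k = T1" using a by (simp add: join_comm)
  then have "pw b m \<squnion> pw a k = T1" using a join_pow_top[of b "pw a k"] by simp
  then show ?thesis using a by (simp add: join_comm)
qed

definition genF :: "'a set \<Rightarrow> 'a \<Rightarrow> 'a set" where
  "genF F a = {z \<in> C. \<exists>f\<in>F. \<exists>k. f \<otimes> pw a k \<sqsubseteq> z}"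

lemma genF_filt: assumes F: "filt F" and a: "a \<in> C" shows "filt (genF F a)"
  unfolding filt_def
proof (intro conjI ballI impI)
  show "genF F a \<subseteq> C" by (auto simp: genF_def)
  show "T1 \<in> genF F a" unfolding genF_def using F filt_top[OF F] by (intro CollectI conjI bexI[of _ T1] exI[of _ 0]) simp_all
next
  fix x y assume x: "x \<in> genF F a" and y: "y \<in> genF F a"
  from x obtain f k where f: "f \<in> F" "f \<otimes> pw a k \<sqsubseteq> x" "x \<in> C" by (auto simp: genF_def)
  from y obtain g m where g: "g \<in> F" "g \<otimes> pw a m \<sqsubseteq> y" "y \<in> C" by (auto simp: genF_def)
  have fC: "f \<in> C" "g \<in> C" using f g F filt_sub by auto
  have "(f \<otimes> g) \<otimes> pw a (k + m) = (f \<otimes> pw a k) \<otimes> (g \<otimes> pw a m)"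
    using fC a by (simp add: pw_add) (metis mult_assoc mult_comm mult_in pw_in)
  moreover have "(f \<otimes> pw a k) \<otimes> (g \<otimes> pw a m) \<sqsubseteq> x \<otimes> y"
    using fC a f g by (intro mult_mono2) simp_all
  ultimately show "x \<otimes> y \<in> genF F a" unfolding genF_def using f g fC F filt_mult
    by (intro CollectI conjI bexI[of _ "f \<otimes> g"] exI[of _ "k + m"]) simp_all
next
  fix x y assume x: "x \<in> genF F a" and y: "y \<in> C" and xy: "x \<sqsubseteq> y"
  from x obtain f k where f: "f \<in> F" "f \<otimes> pw a k \<sqsubseteq> x" "x \<in> C" by (auto simp: genF_def)
  have "f \<in> C" using f F filt_sub by auto
  then have "f \<otimes> pw a k \<sqsubseteq> y" using f xy y a le_trans by (meson mult_in pw_in)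
  then show "y \<in> genF F a" unfolding genF_def using f y by blast
qed

lemma genF_sup: "filt F \<Longrightarrow> a \<in> C \<Longrightarrow> F \<subseteq> genF F a"
proof
  fix x assume F: "filt F" and a: "a \<in> C" and x: "x \<in> F"
  have "x \<in> C" using F x filt_sub by auto
  then have "x \<otimes> pw a 0 \<sqsubseteq> x" by simp
  then show "x \<in> genF F a" unfolding genF_def using x \<open>x \<in> C\<close> by blast
qed

lemma genF_a: "filt F \<Longrightarrow> a \<in> C \<Longrightarrow> a \<in> genF F a"
proof -
  assume F: "filt F" and a: "a \<in> C"
  have "T1 \<otimes> pw a 1 \<sqsubseteq> a" using a by simp
  then show "a \<in> genF F a" unfolding genF_def using a filt_top[OF F] by blast
qed

lemma filt_top_only: "filt {T1}"
  unfolding filt_def using top_le by auto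

lemma max_filter: assumes c: "c \<in> C" "c \<noteq> T1"
  shows "\<exists>M. filt M \<and> c \<notin> M \<and> (\<forall>G. filt G \<and> c \<notin> G \<and> M \<subseteq> G \<longrightarrow> G = M)"
proof -
  let ?A = "{G. filt G \<and> c \<notin> G}"
  have "\<forall>K\<in>chains ?A. \<exists>U\<in>?A. \<forall>X\<in>K. X \<subseteq> U"
  proof
    fix K assume K: "K \<in> chains ?A"
    show "\<exists>U\<in>?A. \<forall>X\<in>K. X \<subseteq> U"
    proof (cases "K = {}")
      case True then show ?thesis using filt_top_only c by auto
    next
      case False
      have KA: "K \<subseteq> ?A" and ch: "\<forall>X\<in>K. \<forall>Y\<in>K. X \<subseteq> Y \<or> Y \<subseteq> X"
        using K unfolding chains_def chain_subset_def by auto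
      have "filt (\<Union>K)" unfolding filt_def
      proof (intro conjI ballI impI)
        show "\<Union>K \<subseteq> C" using KA filt_sub by blast
        show "T1 \<in> \<Union>K" using KA False filt_top by blast
      next
        fix x y assume "x \<in> \<Union>K" "y \<in> \<Union>K"
        then obtain X Y where "X \<in> K" "Y \<in> K" "x \<in> X" "y \<in> Y" by auto
        then show "x \<otimes> y \<in> \<Union>K" using ch KA filt_mult
          by (metis (no_types, lifting) UnionI mem_Collect_eq subsetD subset_iff)
      next
        fix x y assume "x \<in> \<Union>K" "y \<in> C" "x \<sqsubseteq> y"
        then show "y \<in> \<Union>K" using KA filt_up by blast
      qed
      moreover have "c \<notin> \<Union>K" using KA by blast
      ultimately show ?thesis by blast
    qed
  qed
  then obtain M where "M \<in> ?A" "\<forall>X\<in>?A. M \<subseteq> X \<longrightarrow> X = M" using Zorn_Lemma2[of ?A] by blast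
  then show ?thesis by blast
qed

lemma max_prime: assumes M: "filt M" "c \<notin> M" "\<forall>G. filt G \<and> c \<notin> G \<and> M \<subseteq> G \<longrightarrow> G = M"
  and c: "c \<in> C" and ab: "a \<in> C" "b \<in> C" "a \<squnion> b = T1"
  shows "a \<in> M \<or> b \<in> M"
proof (rule ccontr)
  assume n: "\<not> (a \<in> M \<or> b \<in> M)"
  have "c \<in> genF M a" using M genF_filt genF_sup genF_a n ab by blast
  then obtain f k where f: "f \<in> M" "f \<otimes> pw a k \<sqsubseteq> c" by (auto simp: genF_def)
  have "c \<in> genF M b" using M genF_filt genF_sup genF_a n ab by blast
  then obtain g m where g: "g \<in> M" "g \<otimes> pw b m \<sqsubseteq> c" by (auto simp: genF_def)
  have fC: "f \<in> C" "g \<in> C" using f g M filt_sub by auto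
  let ?h = "f \<otimes> g"
  have hM: "?h \<in> M" using f g M filt_mult by auto
  have hC: "?h \<in> C" using fC by simp
  have "pw a k \<sqsubseteq> (f \<leadsto> c)" using f fC ab c resid[of "pw a k" f c] by (simp add: mult_comm)
  moreover have "(f \<leadsto> c) \<sqsubseteq> (?h \<leadsto> c)" using fC c by (simp add: imp_antitone mult_le1)
  ultimately have 1: "pw a k \<sqsubseteq> (?h \<leadsto> c)" using fC c ab le_trans by (meson imp_in mult_in pw_in)
  have "pw b m \<sqsubseteq> (g \<leadsto> c)" using g fC ab c resid[of "pw b m" g c] by (simp add: mult_comm)
  moreover have "(g \<leadsto> c) \<sqsubseteq> (?h \<leadsto> c)" using fC c by (simp add: imp_antitone mult_le)
  ultimately have 2: "pw b m \<sqsubseteq> (?h \<leadsto> c)" using fC c ab le_trans by (meson imp_in mult_in pw_in)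
  have "pw a k \<squnion> pw b m \<sqsubseteq> (?h \<leadsto> c)" using 1 2 ab c hC join_lub by simp
  then have "T1 \<sqsubseteq> (?h \<leadsto> c)" using join_pows_top[OF ab] by simp
  then have "?h \<sqsubseteq> c" using hC c top_le imp_top_iff by (metis imp_in)
  then have "c \<in> M" using hM c M filt_up by blast
  then show False using M by blast
qed

lemma neg_in[simp]: "x \<in> C \<Longrightarrow> ng x \<in> C" by simp
end

locale primF = nma +
  fixes M c
  assumes Mf: "filt M" and cM: "c \<notin> M" and cC: "c \<in> C"
    and Mmax: "\<forall>G. filt G \<and> c \<notin> G \<and> M \<subseteq> G \<longrightarrow> G = M"
begin

lemma prime: "a \<in> C \<Longrightarrow> b \<in> C \<Longrightarrow> a \<squnion> b = T1 \<Longrightarrow> a \<in> M \<or> b \<in> M"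
  using max_prime[OF Mf cM Mmax cC] by blast

definition pre :: "'a \<Rightarrow> 'a \<Rightarrow> bool" where "pre u v \<longleftrightarrow> (u \<leadsto> v) \<in> M"
definition eqv :: "'a \<Rightarrow> 'a \<Rightarrow> bool" where "eqv u v \<longleftrightarrow> pre u v \<and> pre v u"

lemma le_pre: "u \<in> C \<Longrightarrow> v \<in> C \<Longrightarrow> u \<sqsubseteq> v \<Longrightarrow> pre u v"
proof -
  assume a: "u \<in> C" "v \<in> C" "u \<sqsubseteq> v"
  then have "(u \<leadsto> v) = T1" using imp_top_iff by blast
  then show ?thesis unfolding pre_def using filt_top[OF Mf] by simp
qed
lemma pre_refl[simp]: "u \<in> C \<Longrightarrow> pre u u" by (simp add: le_pre)
lemma pre_trans: "u \<in> C \<Longrightarrow> v \<in> C \<Longrightarrow> w \<in> C \<Longrightarrow> pre u v \<Longrightarrow> pre v w \<Longrightarrow> pre u w"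
  unfolding pre_def by (meson Mf filt_mult filt_up imp_in imp_trans mult_in)
lemma pre_total: "u \<in> C \<Longrightarrow> v \<in> C \<Longrightarrow> pre u v \<or> pre v u"
  unfolding pre_def using prime prelin by simp
lemma pre_neg: "u \<in> C \<Longrightarrow> v \<in> C \<Longrightarrow> pre u v \<Longrightarrow> pre (ng v) (ng u)"
  unfolding pre_def by (simp add: contra)
lemma pre_bot[simp]: "u \<in> C \<Longrightarrow> pre B0 u" by (simp add: le_pre)
lemma pre_top[simp]: "u \<in> C \<Longrightarrow> pre u T1" by (simp add: le_pre)
lemma not_pre_top_bot: "\<not> pre T1 B0"
proof
  assume "pre T1 B0"
  then have "B0 \<in> M" unfolding pre_def by simp
  then show False using cM cC Mf filt_up by simp
qed

lemma eqv_refl[simp]: "u \<in> C \<Longrightarrow> eqv u u" by (simp add: eqv_def)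
lemma eqv_sym: "eqv u v \<Longrightarrow> eqv v u" by (simp add: eqv_def)
lemma eqv_trans: "u \<in> C \<Longrightarrow> v \<in> C \<Longrightarrow> w \<in> C \<Longrightarrow> eqv u v \<Longrightarrow> eqv v w \<Longrightarrow> eqv u w"
  unfolding eqv_def using pre_trans by blast
lemma eqv_neg: "u \<in> C \<Longrightarrow> v \<in> C \<Longrightarrow> eqv u v \<Longrightarrow> eqv (ng u) (ng v)"
  unfolding eqv_def using pre_neg by blast

lemma meet_eqv: assumes "u \<in> C" "v \<in> C" "pre u v" shows "eqv (u \<sqinter> v) u"
proof -
  have "(u \<leadsto> v) \<otimes> u \<sqsubseteq> u \<sqinter> v"
    using assms mult_le[of "u \<leadsto> v" u] mp[of u v] by (simp add: meet_glb mult_comm)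
  then have "(u \<leadsto> v) \<sqsubseteq> (u \<leadsto> u \<sqinter> v)" using assms resid by simp
  then have "pre u (u \<sqinter> v)" using assms unfolding pre_def using Mf filt_up by simp
  moreover have "pre (u \<sqinter> v) u" using assms by (simp add: le_pre meet_le1)
  ultimately show ?thesis by (simp add: eqv_def)
qed

lemma join_eqv: assumes "u \<in> C" "v \<in> C" "pre u v" shows "eqv (u \<squnion> v) v"
proof -
  have "(u \<leadsto> v) \<otimes> (u \<squnion> v) = (u \<leadsto> v) \<otimes> u \<squnion> (u \<leadsto> v) \<otimes> v" using assms by (simp add: distrib)
  moreover have "(u \<leadsto> v) \<otimes> u \<squnion> (u \<leadsto> v) \<otimes> v \<sqsubseteq> v"
    using assms mult_le[of "u \<leadsto> v" v] mp[of u v] by (simp add: join_lub mult_comm)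
  ultimately have "(u \<leadsto> v) \<otimes> (u \<squnion> v) \<sqsubseteq> v" by simp
  then have "(u \<leadsto> v) \<sqsubseteq> (u \<squnion> v \<leadsto> v)" using assms resid[of "u \<leadsto> v" "u \<squnion> v" v] by simp
  then have "pre (u \<squnion> v) v" using assms unfolding pre_def using Mf filt_up by simp
  moreover have "pre v (u \<squnion> v)" using assms by (simp add: le_pre join_ub2)
  ultimately show ?thesis by (simp add: eqv_def)
qed

lemma mult_eqv_bot: assumes "u \<in> C" "v \<in> C" "pre u (ng v)" shows "eqv (u \<otimes> v) B0"
proof -
  have "(u \<leadsto> ng v) = ng (u \<otimes> v)" using assms by (simp add: curry)
  then have "pre (u \<otimes> v) B0" using assms(3) unfolding pre_def by simp
  then show ?thesis using assms by (simp add: eqv_def)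
qed

lemma mult_eqv_meet: assumes "u \<in> C" "v \<in> C" "\<not> pre u (ng v)" shows "eqv (u \<otimes> v) (u \<sqinter> v)"
proof -
  have "ng (u \<otimes> v) \<in> M \<or> (u \<sqinter> v \<leadsto> u \<otimes> v) \<in> M" using assms nmax prime by simp
  moreover have "(u \<leadsto> ng v) = ng (u \<otimes> v)" using assms by (simp add: curry)
  then have "ng (u \<otimes> v) \<notin> M" using assms(3) unfolding pre_def by simp
  ultimately have "pre (u \<sqinter> v) (u \<otimes> v)" unfolding pre_def by blast
  moreover have "pre (u \<otimes> v) (u \<sqinter> v)" using assms
    by (simp add: le_pre meet_glb mult_le mult_le1)
  ultimately show ?thesis by (simp add: eqv_def)
qed

end

locale rk = primF +
  fixes S
  assumes Sfin: "finite S" and SC: "S \<subseteq> C" and S0: "B0 \<in> S" and S1: "T1 \<in> S"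
    and Sneg: "\<forall>s\<in>S. ng s \<in> S"
begin

definition g :: "'a \<Rightarrow> nat" where "g u = card {s\<in>S. pre s u}"
definition Fi :: "'a \<Rightarrow> int" where "Fi u = int (g u) - int (g (ng u))"
definition Sish :: "'a \<Rightarrow> bool" where "Sish u \<longleftrightarrow> u \<in> C \<and> (\<exists>s\<in>S. eqv u s)"

lemma g_mono: "u \<in> C \<Longrightarrow> v \<in> C \<Longrightarrow> pre u v \<Longrightarrow> g u \<le> g v"
proof -
  assume a: "u \<in> C" "v \<in> C" "pre u v"
  have "{s\<in>S. pre s u} \<subseteq> {s\<in>S. pre s v}"
  proof
    fix s assume "s \<in> {s\<in>S. pre s u}"
    then show "s \<in> {s\<in>S. pre s v}" using a SC pre_trans[of s u v] by auto
  qed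
  then show ?thesis unfolding g_def using Sfin by (intro card_mono) auto
qed

lemma g_strict: assumes u: "Sish u" and v: "v \<in> C" and n: "\<not> pre u v" shows "g v < g u"
proof -
  obtain s where s: "s \<in> S" "eqv u s" using u Sish_def by auto
  have uC: "u \<in> C" using u Sish_def by auto
  have sC: "s \<in> C" using s SC by auto
  have vu: "pre v u" using pre_total[OF uC v] n by auto
  have sub: "{s\<in>S. pre s v} \<subseteq> {s\<in>S. pre s u}" using SC pre_trans vu v uC by blast
  have "s \<in> {s\<in>S. pre s u}" using s eqv_def by auto
  moreover have "s \<notin> {s\<in>S. pre s v}"
  proof
    assume "s \<in> {s\<in>S. pre s v}"
    then have "pre s v" by simp
    then have "pre u v" using s sC uC v pre_trans eqv_def by blast
    then show False using n by simp
  qed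
  ultimately have "{s\<in>S. pre s v} \<subset> {s\<in>S. pre s u}" using sub by blast
  then show ?thesis unfolding g_def using Sfin by (intro psubset_card_mono) auto
qed

lemma Fi_neg: "u \<in> C \<Longrightarrow> Fi (ng u) = - Fi u" by (simp add: Fi_def)

lemma Fi_mono: "u \<in> C \<Longrightarrow> v \<in> C \<Longrightarrow> pre u v \<Longrightarrow> Fi u \<le> Fi v"
  unfolding Fi_def using g_mono[of u v] g_mono[of "ng v" "ng u"] pre_neg by simp

lemma Fi_strict: "Sish u \<Longrightarrow> v \<in> C \<Longrightarrow> \<not> pre u v \<Longrightarrow> Fi v < Fi u"
proof -
  assume a: "Sish u" "v \<in> C" "\<not> pre u v"
  have uC: "u \<in> C" using a Sish_def by auto
  have "pre v u" using pre_total[OF uC a(2)] a by auto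
  then have "g (ng u) \<le> g (ng v)" using uC a pre_neg g_mono by simp
  then show ?thesis using g_strict[OF a] unfolding Fi_def by simp
qed

lemma pre_iff: "Sish u \<Longrightarrow> v \<in> C \<Longrightarrow> pre u v \<longleftrightarrow> Fi u \<le> Fi v"
proof -
  assume a: "Sish u" "v \<in> C"
  then have "u \<in> C" by (simp add: Sish_def)
  show ?thesis
  proof
    assume "pre u v" then show "Fi u \<le> Fi v" using Fi_mono[of u v] a \<open>u \<in> C\<close> by simp
  next
    assume "Fi u \<le> Fi v" then show "pre u v" using Fi_strict[of u v] a by linarith
  qed
qed

lemma Fi_eqv: "u \<in> C \<Longrightarrow> v \<in> C \<Longrightarrow> eqv u v \<Longrightarrow> Fi u = Fi v"
  unfolding eqv_def using Fi_mono[of u v] Fi_mono[of v u] by simp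

lemma Sish_S: "s \<in> S \<Longrightarrow> Sish s"
proof -
  assume s: "s \<in> S"
  then have "s \<in> C" using SC by auto
  then have "eqv s s" by simp
  then show ?thesis using s \<open>s \<in> C\<close> unfolding Sish_def by blast
qed
lemma Sish_eqv: "Sish u \<Longrightarrow> v \<in> C \<Longrightarrow> eqv v u \<Longrightarrow> Sish v"
proof -
  assume a: "Sish u" "v \<in> C" "eqv v u"
  then obtain s where s: "s \<in> S" "eqv u s" "u \<in> C" by (auto simp: Sish_def)
  then have "eqv v s" using a eqv_trans[of v u s] SC by auto
  then show ?thesis using s a by (auto simp: Sish_def)
qed
lemma Sish_neg: "Sish u \<Longrightarrow> Sish (ng u)"
proof -
  assume a: "Sish u"
  then obtain s where s: "s \<in> S" "eqv u s" "u \<in> C" by (auto simp: Sish_def)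
  then have "eqv (ng u) (ng s)" using eqv_neg[of u s] SC by auto
  moreover have "ng s \<in> S" using s Sneg by auto
  ultimately show ?thesis using s by (auto simp: Sish_def)
qed
lemma Sish_C: "Sish u \<Longrightarrow> u \<in> C" using Sish_def by auto

definition NN :: nat where "NN = nat (Fi T1)"
definition f :: "'a \<Rightarrow> nat" where "f u = nat (Fi u + Fi T1)"

lemma Fi_top_pos: "Fi T1 > 0"
proof -
  have "Fi B0 < Fi T1" using Fi_strict[of T1 B0] Sish_S[OF S1] not_pre_top_bot by simp
  moreover have "Fi B0 = - Fi T1" using Fi_neg[of T1] by simp
  ultimately show ?thesis by simp
qed

lemma NN_int: "int NN = Fi T1" using Fi_top_pos NN_def by simp
lemma NN_pos: "NN \<ge> 1" using Fi_top_pos NN_int by linarith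

lemma Fi_bounds: "u \<in> C \<Longrightarrow> - Fi T1 \<le> Fi u \<and> Fi u \<le> Fi T1"
proof -
  assume u: "u \<in> C"
  have "Fi B0 \<le> Fi u" using Fi_mono[of B0 u] u by simp
  moreover have "Fi B0 = - Fi T1" using Fi_neg[of T1] by simp
  moreover have "Fi u \<le> Fi T1" using Fi_mono[of u T1] u by simp
  ultimately show ?thesis by simp
qed

lemma f_int: "u \<in> C \<Longrightarrow> int (f u) = Fi u + Fi T1"
  using Fi_bounds[of u] unfolding f_def by simp

lemma f_le: "u \<in> C \<Longrightarrow> f u \<le> 2 * NN"
proof -
  assume u: "u \<in> C"
  have "int (f u) \<le> int (2 * NN)" using f_int[OF u] NN_int Fi_bounds[OF u] by simp
  then show ?thesis by linarith
qed
lemma f_bot: "f B0 = 0"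
proof -
  have "int (f B0) = 0" using f_int[of B0] Fi_neg[of T1] by simp
  then show ?thesis by simp
qed
lemma f_top: "f T1 = 2 * NN"
proof -
  have "int (f T1) = int (2 * NN)" using f_int[of T1] NN_int by simp
  then show ?thesis by linarith
qed
lemma f_neg: "u \<in> C \<Longrightarrow> f (ng u) = 2 * NN - f u"
proof -
  assume u: "u \<in> C"
  have "int (f (ng u)) = int (2 * NN) - int (f u)" using f_int[OF u] f_int[of "ng u"] u Fi_neg[OF u] NN_int by simp
  then show ?thesis by linarith
qed
lemma f_pre: "Sish u \<Longrightarrow> v \<in> C \<Longrightarrow> pre u v \<longleftrightarrow> f u \<le> f v"
proof -
  assume a: "Sish u" "v \<in> C"
  then have u: "u \<in> C" using Sish_C by blast
  have "f u \<le> f v \<longleftrightarrow> int (f u) \<le> int (f v)" by simp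
  also have "\<dots> \<longleftrightarrow> Fi u \<le> Fi v" using f_int[OF u] f_int[OF a(2)] by simp
  finally show ?thesis using pre_iff[OF a] by simp
qed
lemma f_eqv: "u \<in> C \<Longrightarrow> v \<in> C \<Longrightarrow> eqv u v \<Longrightarrow> f u = f v"
proof -
  assume "u \<in> C" "v \<in> C" "eqv u v"
  then have "Fi u = Fi v" by (rule Fi_eqv)
  then show ?thesis unfolding f_def by simp
qed

lemma meet_hom: assumes u: "Sish u" and v: "Sish v"
  shows "Sish (u \<sqinter> v) \<and> f (u \<sqinter> v) = min (f u) (f v)"
proof -
  have uC: "u \<in> C" and vC: "v \<in> C" using u v Sish_C by blast+
  show ?thesis
  proof (cases "pre u v")
    case True
    have e: "eqv (u \<sqinter> v) u" using meet_eqv[OF uC vC True] .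
    have "Sish (u \<sqinter> v)" using Sish_eqv[OF u _ e] uC vC by simp
    moreover have "f (u \<sqinter> v) = f u" using f_eqv[OF _ uC e] uC vC by simp
    moreover have "f u \<le> f v" using f_pre[OF u vC] True by simp
    ultimately show ?thesis by simp
  next
    case False
    then have vu: "pre v u" using pre_total[OF uC vC] by simp
    have mc: "u \<sqinter> v = v \<sqinter> u" using uC vC meet_comm by simp
    have e: "eqv (v \<sqinter> u) v" using meet_eqv[OF vC uC vu] .
    have "Sish (v \<sqinter> u)" using Sish_eqv[OF v _ e] uC vC by simp
    moreover have "f (v \<sqinter> u) = f v" using f_eqv[OF _ vC e] uC vC by simp
    moreover have "f v \<le> f u" using f_pre[OF v uC] vu by simp
    ultimately show ?thesis using mc by simp
  qed
qed

lemma join_hom: assumes u: "Sish u" and v: "Sish v"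
  shows "Sish (u \<squnion> v) \<and> f (u \<squnion> v) = max (f u) (f v)"
proof -
  have uC: "u \<in> C" and vC: "v \<in> C" using u v Sish_C by blast+
  show ?thesis
  proof (cases "pre u v")
    case True
    have e: "eqv (u \<squnion> v) v" using join_eqv[OF uC vC True] .
    have "Sish (u \<squnion> v)" using Sish_eqv[OF v _ e] uC vC by simp
    moreover have "f (u \<squnion> v) = f v" using f_eqv[OF _ vC e] uC vC by simp
    moreover have "f u \<le> f v" using f_pre[OF u vC] True by simp
    ultimately show ?thesis by simp
  next
    case False
    then have vu: "pre v u" using pre_total[OF uC vC] by simp
    have mc: "u \<squnion> v = v \<squnion> u" using uC vC join_comm by simp
    have e: "eqv (v \<squnion> u) u" using join_eqv[OF vC uC vu] .
    have "Sish (v \<squnion> u)" using Sish_eqv[OF u _ e] uC vC by simp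
    moreover have "f (v \<squnion> u) = f u" using f_eqv[OF _ uC e] uC vC by simp
    moreover have "f v \<le> f u" using f_pre[OF v uC] vu by simp
    ultimately show ?thesis using mc by simp
  qed
qed

lemma mult_hom: assumes u: "Sish u" and v: "Sish v"
  shows "Sish (u \<otimes> v) \<and> f (u \<otimes> v) = Qmult NN (f u) (f v)"
proof -
  have uC: "u \<in> C" and vC: "v \<in> C" using u v Sish_C by blast+
  have fv: "f v \<le> 2 * NN" using f_le[OF vC] .
  have iff: "pre u (ng v) \<longleftrightarrow> f u + f v \<le> 2 * NN"
    using f_pre[OF u, of "ng v"] f_neg[OF vC] fv vC by auto
  show ?thesis
  proof (cases "pre u (ng v)")
    case True
    have e: "eqv (u \<otimes> v) B0" using mult_eqv_bot[OF uC vC True] .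
    have "Sish (u \<otimes> v)" using Sish_eqv[OF Sish_S[OF S0] _ e] uC vC by simp
    moreover have "f (u \<otimes> v) = 0" using f_eqv[OF _ _ e] uC vC f_bot by simp
    ultimately show ?thesis using True iff by (simp add: Qmult_def)
  next
    case False
    have e: "eqv (u \<otimes> v) (u \<sqinter> v)" using mult_eqv_meet[OF uC vC False] .
    have m: "Sish (u \<sqinter> v) \<and> f (u \<sqinter> v) = min (f u) (f v)" using meet_hom[OF u v] .
    have "Sish (u \<otimes> v)" using Sish_eqv[of "u \<sqinter> v" "u \<otimes> v"] m e uC vC by simp
    moreover have "f (u \<otimes> v) = min (f u) (f v)" using f_eqv[OF _ _ e] uC vC m by simp
    ultimately show ?thesis using False iff by (simp add: Qmult_def)
  qed
qed

lemma imp_hom: assumes u: "Sish u" and v: "Sish v"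
  shows "Sish (u \<leadsto> v) \<and> f (u \<leadsto> v) = 2 * NN - Qmult NN (f u) (2 * NN - f v)"
proof -
  have uC: "u \<in> C" and vC: "v \<in> C" using u v Sish_C by blast+
  have e: "(u \<leadsto> v) = ng (u \<otimes> ng v)" using imp_neg[OF uC vC] .
  have m: "Sish (u \<otimes> ng v) \<and> f (u \<otimes> ng v) = Qmult NN (f u) (f (ng v))" using mult_hom[OF u Sish_neg[OF v]] .
  have "Sish (ng (u \<otimes> ng v))" using Sish_neg m by blast
  moreover have "f (ng (u \<otimes> ng v)) = 2 * NN - f (u \<otimes> ng v)" using f_neg uC vC by simp
  ultimately show ?thesis using e m f_neg[OF vC] by simp
qed

lemma hom: "(\<forall>i\<in>vars t. Sish (w i)) \<Longrightarrow>
  Sish (eval A w t) \<and> f (eval A w t) = eval (Q NN) (\<lambda>i. f (w i)) t"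
proof (induction t)
  case (Var i) then show ?case by simp
next
  case Bot then show ?case using Sish_S[OF S0] f_bot by simp
next
  case Top then show ?case using Sish_S[OF S1] f_top by simp
next
  case (And a b) then show ?case using meet_hom by simp
next
  case (Or a b) then show ?case using join_hom by simp
next
  case (Conj a b) then show ?case using mult_hom by simp
next
  case (Imp a b) then show ?case using imp_hom by simp
qed

lemma no_fix: assumes mm: "nm_minus_algebra A" and u: "Sish u" shows "f u \<noteq> NN"
proof
  assume fu: "f u = NN"
  have uC: "u \<in> C" using u Sish_C by blast
  let ?w = "\<lambda>_::nat. u"
  have "eval A ?w nmf = top A"
    using mm uC unfolding nm_minus_algebra_def nmf_def nm_biimp_def nm_neg_def nm_sq_def Let_def by simp
  moreover have "Sish (eval A ?w nmf) \<and> f (eval A ?w nmf) = eval (Q NN) (\<lambda>i. f (?w i)) nmf"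
    using hom[of nmf ?w] u by simp
  ultimately have "2 * NN = eval (Q NN) (\<lambda>i. NN) nmf" using f_top fu by simp
  moreover have "eval (Q NN) (\<lambda>i. NN) nmf = 0" using NN_pos unfolding nmf_def Let_def by (simp add: Qmult_def)
  ultimately show False using NN_pos by simp
qed

end

lemma eval_cong: "(\<forall>i\<in>vars t. v i = v' i) \<Longrightarrow> eval A v t = eval A v' t"
  by (induction t) auto

lemma eval_in: assumes "nm_algebra A" "\<forall>i. v i \<in> carrier A" shows "eval A v t \<in> carrier A"
proof -
  interpret nma A by unfold_locales (rule assms(1))
  show ?thesis using assms(2) by (induction t) auto
qed

lemma Q_eval_in: "N \<ge> 1 \<Longrightarrow> \<forall>i. v i \<in> carrier (Q N) \<Longrightarrow> eval (Q N) v t \<in> carrier (Q N)"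
  using eval_in Q_nm nm_minus_algebra_def by blast

lemma h_conj: "k \<le> 2*N \<Longrightarrow> l \<le> 2*N \<Longrightarrow> (N < Qmult N k l) = (N < k \<and> N < l)"
  by (auto simp: Qmult_def)

lemma h_imp: "k \<le> 2*N \<Longrightarrow> l \<le> 2*N \<Longrightarrow> k \<noteq> N \<Longrightarrow> l \<noteq> N \<Longrightarrow> N \<ge> 1 \<Longrightarrow>
   (N < 2*N - Qmult N k (2*N - l)) = (N < k \<longrightarrow> N < l)"
  by (simp add: Qimp_eq max_def, auto)

lemma h_lemma: assumes N: "N \<ge> 1" and v: "\<forall>i. v i \<in> carrier (Q N)"
  shows "(N < eval (Q N) v t) = bool_eval (\<lambda>i. N < v i) t"
proof (induction t)
  case (Var i) then show ?case by simp
next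
  case Bot then show ?case by simp
next
  case Top then show ?case using N by simp
next
  case (And a b) then show ?case by simp
next
  case (Or a b) then show ?case by (simp add: less_max_iff_disj)
next
  case (Conj a b)
  have "eval (Q N) v a \<le> 2*N" "eval (Q N) v b \<le> 2*N" using Q_eval_in[OF N v] by auto
  then show ?case using Conj by (simp add: h_conj)
next
  case (Imp a b)
  have "eval (Q N) v a \<le> 2*N" "eval (Q N) v b \<le> 2*N" "eval (Q N) v a \<noteq> N" "eval (Q N) v b \<noteq> N"
    using Q_eval_in[OF N v] by auto
  then show ?case using Imp N by (simp add: h_imp)
qed

lemma card_S_le: "card ({a, b} \<union> w ` {..<n} \<union> h ` {..<n}) \<le> 2 * n + 2"
proof -
  have "card ({a, b} \<union> w ` {..<n} \<union> h ` {..<n}) \<le> card ({a, b} \<union> w ` {..<n}) + card (h ` {..<n})"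
    by (rule card_Un_le)
  also have "\<dots> \<le> card {a, b} + card (w ` {..<n}) + card (h ` {..<n})"
    using card_Un_le[of "{a, b}" "w ` {..<n}"] by simp
  also have "\<dots> \<le> 2 + n + n" using card_image_le[of "{..<n}" w] card_image_le[of "{..<n}" h]
      card_insert_le_m1 by (simp add: card_insert_if)
  finally show ?thesis by simp
qed

lemma completeness:
  assumes mm: "nm_minus_algebra A" and w: "\<forall>i. w i \<in> carrier A"
    and va: "in_vars n a" and vb: "in_vars n b"
    and nle: "\<not> nm_le A (eval A w a) (eval A w b)"
  shows "\<exists>N v. N \<ge> 1 \<and> N \<le> 2*n+2 \<and> (\<forall>i. v i \<in> carrier (Q N)) \<and> (\<forall>i\<ge>n. v i = 0) \<and>
           eval (Q N) v b < eval (Q N) v a"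
proof -
  have nmA: "nm_algebra A" using mm nm_minus_algebra_def by blast
  interpret nma A by (unfold_locales) (rule nmA)
  let ?x = "eval A w a" and ?y = "eval A w b"
  have xC: "?x \<in> C" and yC: "?y \<in> C" using eval_in[OF nmA w] by auto
  let ?c = "?x \<leadsto> ?y"
  have cC: "?c \<in> C" using xC yC by simp
  have cT: "?c \<noteq> T1" using imp_top_iff[OF xC yC] nle by simp
  obtain M where M: "filt M" "?c \<notin> M" "\<forall>G. filt G \<and> ?c \<notin> G \<and> M \<subseteq> G \<longrightarrow> G = M"
    using max_filter[OF cC cT] by blast
  interpret primF A M ?c by (unfold_locales) (use M cC in auto)
  let ?S = "{B0, T1} \<union> w ` {..<n} \<union> (\<lambda>i. ng (w i)) ` {..<n}"
  interpret rk A M ?c ?S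
  proof (unfold_locales)
    show "finite ?S" by simp
    show "?S \<subseteq> C" using w by auto
    show "B0 \<in> ?S" "T1 \<in> ?S" by auto
    show "\<forall>s\<in>?S. ng s \<in> ?S" using w by auto
  qed
  have wS: "i < n \<Longrightarrow> Sish (w i)" for i using Sish_S by simp
  have ha: "Sish ?x \<and> f ?x = eval (Q NN) (\<lambda>i. f (w i)) a"
    using hom[of a w] wS va unfolding in_vars_def by auto
  have hb: "Sish ?y \<and> f ?y = eval (Q NN) (\<lambda>i. f (w i)) b"
    using hom[of b w] wS vb unfolding in_vars_def by auto
  have "\<not> pre ?x ?y" using M pre_def by simp
  then have lt: "f ?y < f ?x" using f_pre[of ?x ?y] ha yC by simp
  define v where "v i = (if i < n then f (w i) else 0)" for i
  have ea: "eval (Q NN) v a = eval (Q NN) (\<lambda>i. f (w i)) a"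
    using va unfolding in_vars_def v_def by (intro eval_cong) auto
  have eb: "eval (Q NN) v b = eval (Q NN) (\<lambda>i. f (w i)) b"
    using vb unfolding in_vars_def v_def by (intro eval_cong) auto
  have vQ: "\<forall>i. v i \<in> carrier (Q NN)"
  proof
    fix i
    show "v i \<in> carrier (Q NN)"
    proof (cases "i < n")
      case True
      then show ?thesis using f_le[of "w i"] w no_fix[OF mm wS[OF True]] unfolding v_def by simp
    next
      case False then show ?thesis using NN_pos unfolding v_def by simp
    qed
  qed
  have "int NN \<le> int (g T1)" using NN_int unfolding Fi_def by simp
  moreover have "g T1 \<le> card ?S" unfolding g_def by (rule card_mono) auto
  moreover have "card ?S \<le> 2 * n + 2" by (rule card_S_le)
  ultimately have "NN \<le> 2 * n + 2" by linarith
  then show ?thesis using NN_pos vQ lt ea eb ha hb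
    by (intro exI[of _ NN] exI[of _ v]) (auto simp: v_def)
qed





definition D :: "nat \<Rightarrow> (nat \<times> (nat \<Rightarrow> nat)) set" where
  "D n = {(N, v). 1 \<le> N \<and> N \<le> 2*n+2 \<and> (\<forall>i. v i \<in> carrier (Q N)) \<and> (\<forall>i\<ge>n. v i = 0)}"

lemma EQB: assumes a: "in_vars n a" and b: "in_vars n b"
  shows "nm_equiv a b \<longleftrightarrow> (\<forall>N v. (N, v) \<in> D n \<longrightarrow> eval (Q N) v a = eval (Q N) v b)"
proof
  assume "nm_equiv a b"
  then have e: "\<And>(A :: nat nm_ops) v. nm_minus_algebra A \<Longrightarrow> (\<forall>i. v i \<in> carrier A) \<Longrightarrow> eval A v a = eval A v b"
    unfolding nm_equiv_def by blast
  show "\<forall>N v. (N, v) \<in> D n \<longrightarrow> eval (Q N) v a = eval (Q N) v b"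
  proof (intro allI impI)
    fix N v assume "(N, v) \<in> D n"
    then have "N \<ge> 1" "\<forall>i. v i \<in> carrier (Q N)" unfolding D_def by auto
    then show "eval (Q N) v a = eval (Q N) v b" using e[OF Q_nm] by blast
  qed
next
  assume h: "\<forall>N v. (N, v) \<in> D n \<longrightarrow> eval (Q N) v a = eval (Q N) v b"
  show "nm_equiv a b" unfolding nm_equiv_def
  proof (intro allI impI)
    fix A :: "nat nm_ops" and w :: "nat \<Rightarrow> nat"
    assume mm: "nm_minus_algebra A" and w: "\<forall>i. w i \<in> carrier A"
    have nmA: "nm_algebra A" using mm nm_minus_algebra_def by blast
    interpret nma A by unfold_locales (rule nmA)
    have xC: "eval A w a \<in> C" and yC: "eval A w b \<in> C" using eval_in[OF nmA w] by auto
    have "nm_le A (eval A w a) (eval A w b)"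
    proof (rule ccontr)
      assume "\<not> nm_le A (eval A w a) (eval A w b)"
      then obtain N v where "N \<ge> 1 \<and> N \<le> 2*n+2 \<and> (\<forall>i. v i \<in> carrier (Q N)) \<and> (\<forall>i\<ge>n. v i = 0) \<and>
           eval (Q N) v b < eval (Q N) v a" using completeness[OF mm w a b] by blast
      then show False using h unfolding D_def by fastforce
    qed
    moreover have "nm_le A (eval A w b) (eval A w a)"
    proof (rule ccontr)
      assume "\<not> nm_le A (eval A w b) (eval A w a)"
      then obtain N v where "N \<ge> 1 \<and> N \<le> 2*n+2 \<and> (\<forall>i. v i \<in> carrier (Q N)) \<and> (\<forall>i\<ge>n. v i = 0) \<and>
           eval (Q N) v a < eval (Q N) v b" using completeness[OF mm w b a] by blast
      then show False using h unfolding D_def by fastforce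
    qed
    ultimately show "eval A w a = eval A w b" using le_antisym xC yC by blast
  qed
qed

definition bv :: "(nat \<Rightarrow> bool) \<Rightarrow> nat \<Rightarrow> nat" where "bv \<mu> i = (if \<mu> i then 2 else 0)"

lemma bv_D: "\<mu> \<in> bool_assignments n \<Longrightarrow> (1, bv \<mu>) \<in> D n"
  unfolding D_def bv_def bool_assignments_def by auto

lemma bv_eval: "(1 < eval (Q 1) (bv \<mu>) t) = bool_eval \<mu> t"
proof -
  have "\<forall>i. bv \<mu> i \<in> carrier (Q 1)" unfolding bv_def by simp
  then have "(1 < eval (Q 1) (bv \<mu>) t) = bool_eval (\<lambda>i. 1 < bv \<mu> i) t" using h_lemma[of 1] by simp
  moreover have "(\<lambda>i. 1 < bv \<mu> i) = \<mu>" unfolding bv_def by auto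
  ultimately show ?thesis by simp
qed

lemma equiv_bool: "in_vars n a \<Longrightarrow> in_vars n b \<Longrightarrow> nm_equiv a b \<Longrightarrow> \<mu> \<in> bool_assignments n \<Longrightarrow>
   bool_eval \<mu> a = bool_eval \<mu> b"
proof -
  assume a: "in_vars n a" "in_vars n b" "nm_equiv a b" "\<mu> \<in> bool_assignments n"
  have "eval (Q 1) (bv \<mu>) a = eval (Q 1) (bv \<mu>) b" using EQB[OF a(1,2)] a(3) bv_D[OF a(4)] by blast
  then show ?thesis using bv_eval[of \<mu> a] bv_eval[of \<mu> b] by simp
qed

lemma D_fin: "finite (D n)"
proof -
  let ?V = "{v :: nat \<Rightarrow> nat. (\<forall>i. v i \<le> 4*n+4) \<and> (\<forall>i\<ge>n. v i = 0)}"
  let ?L = "{xs. set xs \<subseteq> {..4*n+4} \<and> length xs = n}"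
  let ?h = "\<lambda>xs i. if i < n then xs ! i else (0::nat)"
  have "?V \<subseteq> ?h ` ?L"
  proof
    fix v assume v: "v \<in> ?V"
    have "v = ?h (map v [0..<n])"
    proof
      fix i show "v i = ?h (map v [0..<n]) i" using v by (cases "i < n") auto
    qed
    moreover have "map v [0..<n] \<in> ?L" using v by auto
    ultimately show "v \<in> ?h ` ?L" by (rule image_eqI)
  qed
  moreover have "finite (?h ` ?L)" using finite_lists_length_eq[of "{..4*n+4}" n] by simp
  ultimately have fV: "finite ?V" by (rule finite_subset)
  have "D n \<subseteq> {1..2*n+2} \<times> ?V"
  proof
    fix p assume "p \<in> D n"
    then obtain N v where p: "p = (N, v)" "1 \<le> N" "N \<le> 2*n+2" "\<forall>i. v i \<in> carrier (Q N)" "\<forall>i\<ge>n. v i = 0"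
      unfolding D_def by auto
    have "\<forall>i. v i \<le> 4*n+4"
    proof
      fix i have "v i \<le> 2*N" using p(4) by simp
      then show "v i \<le> 4*n+4" using p(3) by linarith
    qed
    then show "p \<in> {1..2*n+2} \<times> ?V" using p by simp
  qed
  moreover have "finite ({1..2*n+2} \<times> ?V)" using fV by simp
  ultimately show ?thesis by (rule finite_subset)
qed

definition sig :: "nat \<Rightarrow> form \<Rightarrow> (nat \<times> (nat \<Rightarrow> nat)) \<Rightarrow> nat" where
  "sig n a = restrict (\<lambda>p. eval (Q (fst p)) (snd p) a) (D n)"

lemma sig_PiE: "sig n a \<in> (\<Pi>\<^sub>E p\<in>D n. {..4*n+4})"
proof -
  have "eval (Q (fst p)) (snd p) a \<le> 4*n+4" if pD: "p \<in> D n" for p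
  proof -
    obtain N v where p: "p = (N, v)" "1 \<le> N" "N \<le> 2*n+2" "\<forall>i. v i \<in> carrier (Q N)" using pD unfolding D_def by auto
    have "eval (Q N) v a \<in> carrier (Q N)" using Q_eval_in p by blast
    then show ?thesis using p by simp
  qed
  then show ?thesis unfolding sig_def by auto
qed

lemma sig_fin: "finite (sig n ` X)"
proof -
  have "finite (\<Pi>\<^sub>E p\<in>D n. {..4*n+4})" using D_fin by (intro finite_PiE) auto
  moreover have "sig n ` X \<subseteq> (\<Pi>\<^sub>E p\<in>D n. {..4*n+4})" using sig_PiE by auto
  ultimately show ?thesis using finite_subset by blast
qed

lemma sig_eq: "sig n a = sig n b \<longleftrightarrow> (\<forall>N v. (N, v) \<in> D n \<longrightarrow> eval (Q N) v a = eval (Q N) v b)"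
proof
  assume "sig n a = sig n b"
  then have h: "\<And>p. p \<in> D n \<Longrightarrow> eval (Q (fst p)) (snd p) a = eval (Q (fst p)) (snd p) b"
    unfolding sig_def restrict_def by (metis (mono_tags, lifting))
  show "\<forall>N v. (N, v) \<in> D n \<longrightarrow> eval (Q N) v a = eval (Q N) v b"
    using h[of "(N, v)" for N v] by simp
next
  assume h: "\<forall>N v. (N, v) \<in> D n \<longrightarrow> eval (Q N) v a = eval (Q N) v b"
  show "sig n a = sig n b" unfolding sig_def restrict_def
  proof
    fix p show "(if p \<in> D n then eval (Q (fst p)) (snd p) a else undefined) =
      (if p \<in> D n then eval (Q (fst p)) (snd p) b else undefined)"
      using h by (cases p) auto
  qed
qed

lemma QE1: "u \<le> 2*N \<Longrightarrow> k \<le> 2*N \<Longrightarrow> k \<noteq> N \<Longrightarrow>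
  u = max (Qmult N u (2*N - Qmult N (2*N - k) (2*N - k))) (Qmult N u (2*N - Qmult N k (2*N - (2*N - k))))"
  by (cases "k < N") (simp_all add: Qsq, auto simp: Qmult_def)

lemma QE2: "u \<le> 2*N \<Longrightarrow>
  u = max (Qmult N u (2*N - Qmult N (Qmult N u u) (2*N))) (Qmult N u (2*N - Qmult N u (2*N - Qmult N u u)))"
  by (cases "u \<le> N") (simp_all add: Qsq, auto simp: Qmult_def)

lemma QE3: "u \<le> 2*N \<Longrightarrow> u \<noteq> N \<Longrightarrow> u = Qmult N u (2*N - Qmult N u (2*N - Qmult N u u)) \<Longrightarrow> Qmult N u u = u"
  by (cases "u \<le> N") (simp_all add: Qsq, auto simp: Qmult_def min_def split: if_splits)

lemma ji_split: "join_irreducible n g \<Longrightarrow> in_vars n a \<Longrightarrow> in_vars n b \<Longrightarrow> nm_equiv g (Or a b) \<Longrightarrow>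
  nm_equiv g a \<or> nm_equiv g b"
  unfolding join_irreducible_def by blast

lemma D_props: "(N, v) \<in> D n \<Longrightarrow> N \<ge> 1 \<and> (\<forall>i. v i \<in> carrier (Q N)) \<and> (\<forall>i\<ge>n. v i = 0)"
  unfolding D_def by auto

lemma ji_two_models:
  assumes ji: "join_irreducible n g" and mt: "\<mu>t \<in> bool_assignments n" "bool_eval \<mu>t g"
    and mf: "\<mu>f \<in> bool_assignments n" "bool_eval \<mu>f g" and i: "\<mu>t i" "\<not> \<mu>f i" "i < n"
  shows False
proof -
  have g: "in_vars n g" using ji join_irreducible_def by blast
  define p1 where "p1 = Imp (Imp (Var i) Bot) (Var i)"
  define p2 where "p2 = Imp (Var i) (Imp (Var i) Bot)"
  have iv: "in_vars n (Conj g p1)" "in_vars n (Conj g p2)" "in_vars n (Or (Conj g p1) (Conj g p2))"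
    using g i unfolding in_vars_def p1_def p2_def by auto
  have "nm_equiv g (Or (Conj g p1) (Conj g p2))"
    unfolding EQB[OF g iv(3)]
  proof (intro allI impI)
    fix N v assume "(N, v) \<in> D n"
    then have N: "N \<ge> 1" and v: "\<forall>i. v i \<in> carrier (Q N)" using D_props by auto
    have u: "eval (Q N) v g \<le> 2*N" using Q_eval_in[OF N v, of g] by simp
    have k: "v i \<le> 2*N" "v i \<noteq> N" using v by auto
    show "eval (Q N) v g = eval (Q N) v (Or (Conj g p1) (Conj g p2))"
      unfolding p1_def p2_def using QE1[OF u k] Qneg2[OF k(1)] by simp
  qed
  then have "nm_equiv g (Conj g p1) \<or> nm_equiv g (Conj g p2)" using ji_split[OF ji iv(1,2)] by blast
  then show False
  proof
    assume "nm_equiv g (Conj g p1)"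
    then have "bool_eval \<mu>f g = bool_eval \<mu>f (Conj g p1)" using equiv_bool[OF g iv(1) _ mf(1)] by blast
    then show False using mf i unfolding p1_def by simp
  next
    assume "nm_equiv g (Conj g p2)"
    then have "bool_eval \<mu>t g = bool_eval \<mu>t (Conj g p2)" using equiv_bool[OF g iv(2) _ mt(1)] by blast
    then show False using mt i unfolding p2_def by simp
  qed
qed

lemma BA_fin: "finite (bool_assignments n)"
proof -
  have "bool_assignments n \<subseteq> (\<lambda>S i. i \<in> S) ` Pow {..<n}"
  proof
    fix \<mu> assume m: "\<mu> \<in> bool_assignments n"
    have "\<mu> = (\<lambda>i. i \<in> {i. \<mu> i})" by simp
    moreover have "{i. \<mu> i} \<in> Pow {..<n}" using m unfolding bool_assignments_def by (auto simp: not_le[symmetric])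
    ultimately show "\<mu> \<in> (\<lambda>S i. i \<in> S) ` Pow {..<n}" by (rule image_eqI)
  qed
  then show ?thesis by (rule finite_subset) simp
qed

lemma ji_card_le1: assumes ji: "join_irreducible n g"
  shows "card {\<mu> \<in> bool_assignments n. bool_eval \<mu> g} \<le> 1"
proof -
  have "\<forall>a\<in>{\<mu> \<in> bool_assignments n. bool_eval \<mu> g}. \<forall>b\<in>{\<mu> \<in> bool_assignments n. bool_eval \<mu> g}. a = b"
  proof (intro ballI)
    fix a b assume a: "a \<in> {\<mu> \<in> bool_assignments n. bool_eval \<mu> g}" and b: "b \<in> {\<mu> \<in> bool_assignments n. bool_eval \<mu> g}"
    show "a = b"
    proof
      fix i show "a i = b i"
      proof (rule ccontr)
        assume ne: "a i \<noteq> b i"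
        have "i < n"
        proof (rule ccontr)
          assume "\<not> i < n"
          then show False using a b ne unfolding bool_assignments_def by auto
        qed
        show False
        proof (cases "a i")
          case True then show False using ji_two_models[OF ji, of a b i] a b ne \<open>i < n\<close> by auto
        next
          case False then show False using ji_two_models[OF ji, of b a i] a b ne \<open>i < n\<close> by auto
        qed
      qed
    qed
  qed
  then show ?thesis using card_le_Suc0_iff_eq[of "{\<mu> \<in> bool_assignments n. bool_eval \<mu> g}"] BA_fin by simp
qed

lemma ji_model_idem: assumes ji: "join_irreducible n g" and m: "\<mu> \<in> bool_assignments n" "bool_eval \<mu> g"
  shows "idempotent_class g"
proof -
  have g: "in_vars n g" using ji join_irreducible_def by blast
  define q1 where "q1 = Conj g (Imp (Conj g g) Bot)"
  define q2 where "q2 = Conj g (Imp g (Conj g g))"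
  have iv: "in_vars n q1" "in_vars n q2" "in_vars n (Or q1 q2)" "in_vars n (Conj g g)"
    using g unfolding in_vars_def q1_def q2_def by auto
  have "nm_equiv g (Or q1 q2)"
    unfolding EQB[OF g iv(3)]
  proof (intro allI impI)
    fix N v assume "(N, v) \<in> D n"
    then have N: "N \<ge> 1" and v: "\<forall>i. v i \<in> carrier (Q N)" using D_props by auto
    have u: "eval (Q N) v g \<le> 2*N" using Q_eval_in[OF N v, of g] by simp
    show "eval (Q N) v g = eval (Q N) v (Or q1 q2)"
      unfolding q1_def q2_def using QE2[OF u] by simp
  qed
  then have "nm_equiv g q1 \<or> nm_equiv g q2" using ji_split[OF ji iv(1,2)] by blast
  moreover have "\<not> nm_equiv g q1"
  proof
    assume "nm_equiv g q1"
    then have "bool_eval \<mu> g = bool_eval \<mu> q1" using equiv_bool[OF g iv(1) _ m(1)] by blast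
    then show False using m unfolding q1_def by simp
  qed
  ultimately have e: "nm_equiv g q2" by blast
  have "nm_equiv (Conj g g) g"
    unfolding EQB[OF iv(4) g]
  proof (intro allI impI)
    fix N v assume D: "(N, v) \<in> D n"
    then have N: "N \<ge> 1" and v: "\<forall>i. v i \<in> carrier (Q N)" using D_props by auto
    have u: "eval (Q N) v g \<le> 2*N" "eval (Q N) v g \<noteq> N" using Q_eval_in[OF N v, of g] by auto
    have "eval (Q N) v g = eval (Q N) v q2" using e EQB[OF g iv(2)] D by blast
    then show "eval (Q N) v (Conj g g) = eval (Q N) v g"
      using QE3[OF u] unfolding q2_def by simp
  qed
  then show ?thesis unfolding idempotent_class_def .
qed

lemma ji_idem_model: assumes ji: "join_irreducible n g" and idem: "idempotent_class g"
  shows "\<exists>\<mu>\<in>bool_assignments n. bool_eval \<mu> g"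
proof (rule ccontr)
  assume nm: "\<not> (\<exists>\<mu>\<in>bool_assignments n. bool_eval \<mu> g)"
  have g: "in_vars n g" using ji join_irreducible_def by blast
  have gg: "in_vars n (Conj g g)" using g unfolding in_vars_def by simp
  have b: "in_vars n Bot" unfolding in_vars_def by simp
  have "nm_equiv g Bot"
    unfolding EQB[OF g b]
  proof (intro allI impI)
    fix N v assume D: "(N, v) \<in> D n"
    then have N: "N \<ge> 1" and v: "\<forall>i. v i \<in> carrier (Q N)" and v0: "\<forall>i\<ge>n. v i = 0" using D_props by auto
    have "(\<lambda>i. N < v i) \<in> bool_assignments n" using v0 unfolding bool_assignments_def by simp
    then have "\<not> bool_eval (\<lambda>i. N < v i) g" using nm by blast
    then have le: "\<not> N < eval (Q N) v g" using h_lemma[OF N v] by simp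
    have "eval (Q N) v (Conj g g) = eval (Q N) v g" using idem EQB[OF gg g] D unfolding idempotent_class_def by blast
    then have "Qmult N (eval (Q N) v g) (eval (Q N) v g) = eval (Q N) v g" by simp
    then show "eval (Q N) v g = eval (Q N) v Bot" using le Qsq[of N "eval (Q N) v g"] by simp
  qed
  then show False using ji join_irreducible_def by blast
qed

definition nu0 :: "nat \<Rightarrow> form \<Rightarrow> real" where
  "nu0 n a = real (card {\<mu> \<in> bool_assignments n. bool_eval \<mu> a})"

lemma nu0_chi: "is_chi_plus n (nu0 n)"
  unfolding is_chi_plus_def is_lattice_valuation_def
proof (intro conjI allI impI)
  fix a b assume a: "in_vars n a" and b: "in_vars n b" and e: "nm_equiv a b"
  have "{\<mu> \<in> bool_assignments n. bool_eval \<mu> a} = {\<mu> \<in> bool_assignments n. bool_eval \<mu> b}"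
    using equiv_bool[OF a b e] by auto
  then show "nu0 n a = nu0 n b" unfolding nu0_def by simp
next
  fix a b :: form
  let ?A = "{\<mu> \<in> bool_assignments n. bool_eval \<mu> a}" and ?B = "{\<mu> \<in> bool_assignments n. bool_eval \<mu> b}"
  have f: "finite ?A" "finite ?B" using BA_fin by auto
  have "{\<mu> \<in> bool_assignments n. bool_eval \<mu> (Or a b)} = ?A \<union> ?B" by auto
  moreover have "{\<mu> \<in> bool_assignments n. bool_eval \<mu> (And a b)} = ?A \<inter> ?B" by auto
  moreover have "real (card ?A + card ?B) = real (card (?A \<union> ?B) + card (?A \<inter> ?B))"
    using card_Un_Int[OF f] by simp
  ultimately show "nu0 n a + nu0 n b = nu0 n (Or a b) + nu0 n (And a b)"
    unfolding nu0_def by simp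
next
  show "nu0 n Bot = 0" unfolding nu0_def by simp
next
  fix g assume ji: "join_irreducible n g"
  let ?G = "{\<mu> \<in> bool_assignments n. bool_eval \<mu> g}"
  show "nu0 n g = (if idempotent_class g then 1 else 0)"
  proof (cases "idempotent_class g")
    case True
    then obtain \<mu> where "\<mu> \<in> ?G" using ji_idem_model[OF ji] by blast
    then have "card ?G \<noteq> 0" using BA_fin by auto
    then have "card ?G = 1" using ji_card_le1[OF ji] by simp
    then show ?thesis using True unfolding nu0_def by simp
  next
    case False
    then have e: "?G = {}" using ji_model_idem[OF ji] by blast
    show ?thesis using False unfolding nu0_def e by simp
  qed
qed

definition leQ :: "nat \<Rightarrow> form \<Rightarrow> form \<Rightarrow> bool" where
  "leQ n x a \<longleftrightarrow> (\<forall>N v. (N, v) \<in> D n \<longrightarrow> eval (Q N) v x \<le> eval (Q N) v a)"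

definition mm :: "nat \<Rightarrow> form \<Rightarrow> nat" where
  "mm n a = card {sig n x | x. in_vars n x \<and> leQ n x a}"

lemma mm_less: assumes a: "in_vars n a" and x: "in_vars n x" and le: "leQ n x a" and ne: "\<not> nm_equiv a x"
  shows "mm n x < mm n a"
proof -
  let ?X = "{sig n y | y. in_vars n y \<and> leQ n y x}" and ?A = "{sig n y | y. in_vars n y \<and> leQ n y a}"
  have sub: "?X \<subseteq> ?A"
  proof
    fix z assume "z \<in> ?X"
    then obtain y where y: "z = sig n y" "in_vars n y" "leQ n y x" by blast
    have "leQ n y a" using y(3) le unfolding leQ_def using le_trans by blast
    then show "z \<in> ?A" using y by blast
  qed
  have "sig n a \<in> ?A" using a unfolding leQ_def by auto
  moreover have "sig n a \<notin> ?X"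
  proof
    assume "sig n a \<in> ?X"
    then obtain y where y: "sig n a = sig n y" "in_vars n y" "leQ n y x" by auto
    have "\<forall>N v. (N, v) \<in> D n \<longrightarrow> eval (Q N) v a = eval (Q N) v x"
    proof (intro allI impI)
      fix N v assume D: "(N, v) \<in> D n"
      have "eval (Q N) v a = eval (Q N) v y" using y(1) sig_eq D by blast
      moreover have "eval (Q N) v y \<le> eval (Q N) v x" using y(3) D leQ_def by blast
      moreover have "eval (Q N) v x \<le> eval (Q N) v a" using le D leQ_def by blast
      ultimately show "eval (Q N) v a = eval (Q N) v x" by simp
    qed
    then have "nm_equiv a x" using EQB[OF a x] by blast
    then show False using ne by simp
  qed
  ultimately have ps: "?X \<subset> ?A" using sub by blast
  have "finite ?A" using sig_fin[of n UNIV] by (rule finite_subset[rotated]) auto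
  then show ?thesis unfolding mm_def using ps psubset_card_mono by blast
qed

lemma chi_parts: assumes "is_chi_plus n \<nu>"
  shows "\<forall>a b. in_vars n a \<longrightarrow> in_vars n b \<longrightarrow> nm_equiv a b \<longrightarrow> \<nu> a = \<nu> b"
    "\<forall>a b. in_vars n a \<longrightarrow> in_vars n b \<longrightarrow> \<nu> a + \<nu> b = \<nu> (Or a b) + \<nu> (And a b)"
    "\<nu> Bot = 0" "\<forall>g. join_irreducible n g \<longrightarrow> \<nu> g = (if idempotent_class g then 1 else 0)"
  using assms unfolding is_chi_plus_def is_lattice_valuation_def by simp_all

lemma uniq: assumes c1: "is_chi_plus n \<nu>1" and c2: "is_chi_plus n \<nu>2"
  shows "in_vars n a \<Longrightarrow> \<nu>1 a = \<nu>2 a"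
proof (induction "mm n a" arbitrary: a rule: less_induct)
  case less
  have a: "in_vars n a" by fact
  have b0: "in_vars n Bot" unfolding in_vars_def by simp
  note p1 = chi_parts[OF c1] and p2 = chi_parts[OF c2]
  have r1: "\<And>x y. in_vars n x \<Longrightarrow> in_vars n y \<Longrightarrow> nm_equiv x y \<Longrightarrow> \<nu>1 x = \<nu>1 y" using p1(1) by blast
  have m1: "\<And>x y. in_vars n x \<Longrightarrow> in_vars n y \<Longrightarrow> \<nu>1 x + \<nu>1 y = \<nu>1 (Or x y) + \<nu>1 (And x y)" using p1(2) by blast
  have z1: "\<nu>1 Bot = 0" using p1(3) .
  have j1: "\<And>g. join_irreducible n g \<Longrightarrow> \<nu>1 g = (if idempotent_class g then 1 else 0)" using p1(4) by blast
  have r2: "\<And>x y. in_vars n x \<Longrightarrow> in_vars n y \<Longrightarrow> nm_equiv x y \<Longrightarrow> \<nu>2 x = \<nu>2 y" using p2(1) by blast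
  have m2: "\<And>x y. in_vars n x \<Longrightarrow> in_vars n y \<Longrightarrow> \<nu>2 x + \<nu>2 y = \<nu>2 (Or x y) + \<nu>2 (And x y)" using p2(2) by blast
  have z2: "\<nu>2 Bot = 0" using p2(3) .
  have j2: "\<And>g. join_irreducible n g \<Longrightarrow> \<nu>2 g = (if idempotent_class g then 1 else 0)" using p2(4) by blast
  show ?case
  proof (cases "nm_equiv a Bot")
    case True
    then show ?thesis using r1[OF a b0] r2[OF a b0] z1 z2 by simp
  next
    case nb: False
    show ?thesis
    proof (cases "join_irreducible n a")
      case True then show ?thesis using j1 j2 by simp
    next
      case False
      then obtain b c where bc: "in_vars n b" "in_vars n c" "nm_equiv a (Or b c)" "\<not> nm_equiv a b" "\<not> nm_equiv a c"
        using a nb unfolding join_irreducible_def by blast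
      have o: "in_vars n (Or b c)" and an: "in_vars n (And b c)" using bc unfolding in_vars_def by auto
      have pt: "\<And>N v. (N, v) \<in> D n \<Longrightarrow> eval (Q N) v a = max (eval (Q N) v b) (eval (Q N) v c)"
        using EQB[OF a o] bc(3) by simp
      have lb: "leQ n b a" and lc: "leQ n c a" and lbc: "leQ n (And b c) a"
        unfolding leQ_def using pt by auto
      have nbc: "\<not> nm_equiv a (And b c)"
      proof
        assume "nm_equiv a (And b c)"
        then have "\<And>N v. (N, v) \<in> D n \<Longrightarrow> eval (Q N) v a = min (eval (Q N) v b) (eval (Q N) v c)"
          using EQB[OF a an] by simp
        then have "\<forall>N v. (N, v) \<in> D n \<longrightarrow> eval (Q N) v a = eval (Q N) v b"
        proof (intro allI impI)
          fix N v assume D: "(N, v) \<in> D n"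
          assume h: "\<And>N v. (N, v) \<in> D n \<Longrightarrow> eval (Q N) v a = min (eval (Q N) v b) (eval (Q N) v c)"
          have "eval (Q N) v a = min (eval (Q N) v b) (eval (Q N) v c)" using h[OF D] .
          moreover have "eval (Q N) v a = max (eval (Q N) v b) (eval (Q N) v c)" using pt[OF D] .
          ultimately show "eval (Q N) v a = eval (Q N) v b" by linarith
        qed
        then show False using EQB[OF a bc(1)] bc(4) by blast
      qed
      have ib: "\<nu>1 b = \<nu>2 b" using less(1)[OF mm_less[OF a bc(1) lb bc(4)] bc(1)] .
      have ic: "\<nu>1 c = \<nu>2 c" using less(1)[OF mm_less[OF a bc(2) lc bc(5)] bc(2)] .
      have ibc: "\<nu>1 (And b c) = \<nu>2 (And b c)" using less(1)[OF mm_less[OF a an lbc nbc] an] .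
      have "\<nu>1 a = \<nu>1 (Or b c)" using r1[OF a o bc(3)] .
      also have "\<dots> = \<nu>1 b + \<nu>1 c - \<nu>1 (And b c)" using m1[OF bc(1,2)] by simp
      also have "\<dots> = \<nu>2 b + \<nu>2 c - \<nu>2 (And b c)" using ib ic ibc by simp
      also have "\<dots> = \<nu>2 (Or b c)" using m2[OF bc(1,2)] by simp
      also have "\<dots> = \<nu>2 a" using r2[OF a o bc(3)] by simp
      finally show ?thesis .
    qed
  qed
qed

theorem theorem8:
  fixes n :: nat and \<phi> :: form
  assumes "n \<ge> 1" and "in_vars n \<phi>"
  shows "(\<exists>\<nu>. is_chi_plus n \<nu>) \<and>
         (\<forall>\<nu>. is_chi_plus n \<nu> \<longrightarrow>
            \<nu> \<phi> = real (card {\<mu> \<in> bool_assignments n. bool_eval \<mu> \<phi>}))"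
proof (intro conjI allI impI)
  show "\<exists>\<nu>. is_chi_plus n \<nu>" using nu0_chi by blast
next
  fix \<nu> assume "is_chi_plus n \<nu>"
  then have "\<nu> \<phi> = nu0 n \<phi>" using uniq[OF _ nu0_chi assms(2)] by blast
  then show "\<nu> \<phi> = real (card {\<mu> \<in> bool_assignments n. bool_eval \<mu> \<phi>})" unfolding nu0_def .
qed


end
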